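(* For every finite graph $G$ we have $\chi_{alg}(G)\le 4$; equivalently, for every finite graph $G$ the algebra $\mathcal A(G,K_4)$ is nonzero (i.e. $1\notin\mathcal I(G,K_4)$).
   Context: Graphs are finite, with no loops and symmetric edge set $E(G)\subseteq V(G)\times V(G)$; $K_c$ is the complete graph on $c$ vertices. For finite sets $I,O$ with $|I|=n$, $|O|=m$, identify $O$ with $\{0,\dots,m-1\}$. Let $\mathbb F(n,m)$ be the free product of $n$ copies of the cyclic group of order $m$, with generators $u_v$ ($v\in I$), $u_v^m=1$, and let $\mathbb C[\mathbb F(n,m)]$ be its complex group $*$-algebra ($g^*=g^{-1}$). With $\omega=e^{2\pi i/m}$ put $e_{v,a}=\frac1m\sum_{k=0}^{m-1}(\omega^{-a}u_v)^k$ (self-adjoint idempotents with $\sum_a e_{v,a}=1$). For graphs $G,H$, the graph homomorphism game has $I=V(G)$, $O=V(H)$ and rule $\lambda(v,w,a,b)=0$ iff either ($v=w$ and $a\neq b$) or ($(v,w)\in E(G)$ and $(a,b)\notin E(H)$), and $\lambda=1$ otherwise. $\mathcal I(G,H)$ is the two-sided $*$-ideal of $\mathbb C[\mathbb F(n,m)]$ generated by $\{e_{v,a}e_{w,b}:\lambda(v,w,a,b)=0\}$ and $\mathcal A(G,H)=\mathbb C[\mathbb F(n,m)]/\mathcal I(G,H)$. The algebraic chromatic number is $\chi_{alg}(G)=\min\{c:\mathcal A(G,K_c)\neq 0\}$. *)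

theory Defs
  imports Complex_Main
begin

section \<open>The free product F(I,m) of copies of Z/m, realised by reduced words\<close>

text \<open>A word is a list of letters (v,k), standing for u_v^k. Reduced words have
  v in I, 0 < k < m, and consecutive letters with distinct generator index.\<close>

type_synonym 'v word = "('v \<times> nat) list"

definition reduced_word :: "'v set \<Rightarrow> nat \<Rightarrow> 'v word \<Rightarrow> bool" where
  "reduced_word I m w \<longleftrightarrow>
     (\<forall>(v,k)\<in>set w. v \<in> I \<and> 0 < k \<and> k < m) \<and> successively (\<lambda>x y. fst x \<noteq> fst y) w"

text \<open>Left multiplication of a reduced word by the group element u_v^k.\<close>
fun ins_letter :: "nat \<Rightarrow> 'v \<times> nat \<Rightarrow> 'v word \<Rightarrow> 'v word" where
  "ins_letter m (v,k) [] = (if k mod m = 0 then [] else [(v, k mod m)])"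
| "ins_letter m (v,k) ((u,j) # w) =
     (if u = v then (if (k + j) mod m = 0 then w else (v, (k + j) mod m) # w)
      else if k mod m = 0 then (u,j) # w else (v, k mod m) # (u,j) # w)"

definition word_mult :: "nat \<Rightarrow> 'v word \<Rightarrow> 'v word \<Rightarrow> 'v word" where
  "word_mult m x y = foldr (ins_letter m) x y"

definition word_inv :: "nat \<Rightarrow> 'v word \<Rightarrow> 'v word" where
  "word_inv m w = rev (map (\<lambda>(v,k). (v, m - k)) w)"

definition galg :: "'v set \<Rightarrow> nat \<Rightarrow> ('v word \<Rightarrow> complex) set" where
  "galg I m = {f. finite {w. f w \<noteq> 0} \<and> (\<forall>w. f w \<noteq> 0 \<longrightarrow> reduced_word I m w)}"

definition gadd :: "('v word \<Rightarrow> complex) \<Rightarrow> ('v word \<Rightarrow> complex) \<Rightarrow> ('v word \<Rightarrow> complex)" where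
  "gadd f g = (\<lambda>w. f w + g w)"

definition gscale :: "complex \<Rightarrow> ('v word \<Rightarrow> complex) \<Rightarrow> ('v word \<Rightarrow> complex)" where
  "gscale c f = (\<lambda>w. c * f w)"

definition gmult :: "nat \<Rightarrow> ('v word \<Rightarrow> complex) \<Rightarrow> ('v word \<Rightarrow> complex) \<Rightarrow> ('v word \<Rightarrow> complex)" where
  "gmult m f g = (\<lambda>w. \<Sum>(x,y)\<in>{(x,y). f x \<noteq> 0 \<and> g y \<noteq> 0 \<and> word_mult m x y = w}. f x * g y)"

definition gstar :: "nat \<Rightarrow> ('v word \<Rightarrow> complex) \<Rightarrow> ('v word \<Rightarrow> complex)" where
  "gstar m f = (\<lambda>w. cnj (f (word_inv m w)))"

definition gelem :: "'v word \<Rightarrow> ('v word \<Rightarrow> complex)" where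
  "gelem g = (\<lambda>w. if w = g then 1 else 0)"

definition gone :: "'v word \<Rightarrow> complex" where
  "gone = gelem []"

definition ugen :: "nat \<Rightarrow> 'v \<Rightarrow> 'v word" where
  "ugen m v = ins_letter m (v, 1) []"

primrec gpow :: "nat \<Rightarrow> ('v word \<Rightarrow> complex) \<Rightarrow> nat \<Rightarrow> ('v word \<Rightarrow> complex)" where
  "gpow m f 0 = gone"
| "gpow m f (Suc k) = gmult m (gpow m f k) f"

definition omega :: "nat \<Rightarrow> complex" where
  "omega m = exp (2 * of_real pi * \<i> / of_nat m)"

definition eproj :: "nat \<Rightarrow> 'v \<Rightarrow> nat \<Rightarrow> ('v word \<Rightarrow> complex)" where
  "eproj m v a = (\<lambda>w. (1 / of_nat m) *
      (\<Sum>k<m. gpow m (gscale (inverse (omega m) ^ a) (gelem (ugen m v))) k w))"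

inductive_set star_ideal :: "'v set \<Rightarrow> nat \<Rightarrow> ('v word \<Rightarrow> complex) set \<Rightarrow> ('v word \<Rightarrow> complex) set"
  for I m S where
  gen: "s \<in> S \<Longrightarrow> s \<in> star_ideal I m S"
| zero: "(\<lambda>w. 0) \<in> star_ideal I m S"
| add: "x \<in> star_ideal I m S \<Longrightarrow> y \<in> star_ideal I m S \<Longrightarrow> gadd x y \<in> star_ideal I m S"
| lmult: "a \<in> galg I m \<Longrightarrow> x \<in> star_ideal I m S \<Longrightarrow> gmult m a x \<in> star_ideal I m S"
| rmult: "a \<in> galg I m \<Longrightarrow> x \<in> star_ideal I m S \<Longrightarrow> gmult m x a \<in> star_ideal I m S"
| star: "x \<in> star_ideal I m S \<Longrightarrow> gstar m x \<in> star_ideal I m S"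

definition is_graph :: "'v set \<Rightarrow> ('v \<times> 'v) set \<Rightarrow> bool" where
  "is_graph V E \<longleftrightarrow> finite V \<and> E \<subseteq> V \<times> V \<and> sym E \<and> (\<forall>v. (v,v) \<notin> E)"

definition K_verts :: "nat \<Rightarrow> nat set" where
  "K_verts c = {0..<c}"

definition K_edges :: "nat \<Rightarrow> (nat \<times> nat) set" where
  "K_edges c = {(a,b). a < c \<and> b < c \<and> a \<noteq> b}"

definition hom_rule :: "('v \<times> 'v) set \<Rightarrow> (nat \<times> nat) set \<Rightarrow> 'v \<Rightarrow> 'v \<Rightarrow> nat \<Rightarrow> nat \<Rightarrow> bool" where
  "hom_rule E F v w a b \<longleftrightarrow> \<not> ((v = w \<and> a \<noteq> b) \<or> ((v,w) \<in> E \<and> (a,b) \<notin> F))"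

text \<open>Ideal I(G,H) for H with vertex set {0..<m} (O identified with {0,...,m-1}).\<close>
definition hom_ideal :: "'v set \<Rightarrow> ('v \<times> 'v) set \<Rightarrow> nat \<Rightarrow> (nat \<times> nat) set \<Rightarrow> ('v word \<Rightarrow> complex) set" where
  "hom_ideal V E m F = star_ideal V m
     {gmult m (eproj m v a) (eproj m w b) | v w a b.
        v \<in> V \<and> w \<in> V \<and> a < m \<and> b < m \<and> \<not> hom_rule E F v w a b}"

text \<open>A(G,H) = C[F(n,m)] / I(G,H) is nonzero.\<close>
definition hom_alg_nonzero :: "'v set \<Rightarrow> ('v \<times> 'v) set \<Rightarrow> nat \<Rightarrow> (nat \<times> nat) set \<Rightarrow> bool" where
  "hom_alg_nonzero V E m F \<longleftrightarrow> (\<exists>x \<in> galg V m. x \<notin> hom_ideal V E m F)"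

definition chi_alg :: "'v set \<Rightarrow> ('v \<times> 'v) set \<Rightarrow> nat" where
  "chi_alg V E = (LEAST c. 1 \<le> c \<and> hom_alg_nonzero V E c (K_edges c))"

end

theory Submission
  imports Defs
begin


type_synonym 'v vec = "'v list \<Rightarrow> complex"

definition lin :: "('v vec \<Rightarrow> 'v vec) \<Rightarrow> bool" where
  "lin T \<longleftrightarrow> (\<forall>f g. T (\<lambda>u. f u + g u) = (\<lambda>u. T f u + T g u)) \<and> (\<forall>c f. T (\<lambda>u. c * f u) = (\<lambda>u. c * T f u))"

lemma lin_add: "lin T \<Longrightarrow> T (\<lambda>u. f u + g u) = (\<lambda>u. T f u + T g u)"
  unfolding lin_def by blast
lemma lin_scale: "lin T \<Longrightarrow> T (\<lambda>u. c * f u) = (\<lambda>u. c * T f u)"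
  unfolding lin_def by blast
lemma lin_zero: "lin T \<Longrightarrow> T (\<lambda>u. 0) = (\<lambda>u. 0)"
  using lin_scale[of T 0 "\<lambda>u. 0"] by simp
lemma lin_minus: "lin T \<Longrightarrow> T (\<lambda>u. - f u) = (\<lambda>u. - T f u)"
  using lin_scale[of T "-1" f] by simp
lemma lin_diff: "lin T \<Longrightarrow> T (\<lambda>u. f u - g u) = (\<lambda>u. T f u - T g u)"
proof -
  assume l: "lin T"
  have "T (\<lambda>u. f u - g u) = T (\<lambda>u. f u + (\<lambda>u. - g u) u)" by simp
  also have "\<dots> = (\<lambda>u. T f u + T (\<lambda>u. - g u) u)" by (rule lin_add[OF l])
  also have "\<dots> = (\<lambda>u. T f u - T g u)" using lin_minus[OF l, of g] by simp
  finally show ?thesis .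
qed
lemma lin_sum:
  assumes l: "lin T" and fI: "finite I"
  shows "T (\<lambda>u. \<Sum>i\<in>I. h i u) = (\<lambda>u. \<Sum>i\<in>I. T (h i) u)"
  using fI
proof (induction I rule: finite_induct)
  case empty then show ?case using lin_zero[OF l] by simp
next
  case (insert x F)
  have "T (\<lambda>u. \<Sum>i\<in>insert x F. h i u) = T (\<lambda>u. h x u + (\<lambda>u. \<Sum>i\<in>F. h i u) u)"
    using insert by simp
  also have "\<dots> = (\<lambda>u. T (h x) u + T (\<lambda>u. \<Sum>i\<in>F. h i u) u)" by (rule lin_add[OF l])
  finally show ?case using insert by simp
qed

lemma lin_addp: "lin T \<Longrightarrow> T (\<lambda>u. f u + g u) u = T f u + T g u" by (simp add: lin_add)
lemma lin_scalep: "lin T \<Longrightarrow> T (\<lambda>u. c * f u) u = c * T f u" by (simp add: lin_scale)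
lemma lin_zerop: "lin T \<Longrightarrow> T (\<lambda>u. 0) u = 0" by (simp add: lin_zero)
lemma lin_diffp: "lin T \<Longrightarrow> T (\<lambda>u. f u - g u) u = T f u - T g u" by (simp add: lin_diff)
lemma lin_minusp: "lin T \<Longrightarrow> T (\<lambda>u. - f u) u = - T f u" by (simp add: lin_minus)
lemma lin_sump: "lin T \<Longrightarrow> finite I \<Longrightarrow> T (\<lambda>u. \<Sum>i\<in>I. h i u) u = (\<Sum>i\<in>I. T (h i) u)"
  by (simp add: lin_sum)

lemma lin_id: "lin (\<lambda>f. f)" unfolding lin_def by simp
lemma lin_comp: "lin S \<Longrightarrow> lin T \<Longrightarrow> lin (\<lambda>f. S (T f))"
  unfolding lin_def by simp
lemma lin_plus_ops: "lin S \<Longrightarrow> lin T \<Longrightarrow> lin (\<lambda>f u. S f u + T f u)"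
  unfolding lin_def by (simp add: algebra_simps)
lemma lin_minus_ops: "lin S \<Longrightarrow> lin T \<Longrightarrow> lin (\<lambda>f u. S f u - T f u)"
  unfolding lin_def by (simp add: algebra_simps)
lemma lin_scale_ops: "lin S \<Longrightarrow> lin (\<lambda>f u. c * S f u)"
  unfolding lin_def by (simp add: algebra_simps)
lemma lin_sum_ops:
  assumes "finite I" "\<And>i. i \<in> I \<Longrightarrow> lin (T i)"
  shows "lin (\<lambda>f u. \<Sum>i\<in>I. T i f u)"
  unfolding lin_def using assms
  by (simp add: lin_add lin_scale sum.distrib sum_distrib_left)

definition Lop :: "'v \<Rightarrow> 'v vec \<Rightarrow> 'v vec" where
  "Lop v g = (\<lambda>u. case u of [] \<Rightarrow> 0 | x # u' \<Rightarrow> if x = v then g u' else 0)"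
definition prj :: "'v \<Rightarrow> 'v vec \<Rightarrow> 'v vec" where
  "prj w f = (\<lambda>u. f (w # u))"

lemma Lop_Nil[simp]: "Lop v g [] = 0" by (simp add: Lop_def)
lemma Lop_Cons[simp]: "Lop v g (x # u) = (if x = v then g u else 0)" by (simp add: Lop_def)
lemma prj_app[simp]: "prj w f u = f (w # u)" by (simp add: prj_def)

lemma lin_Lop: "lin (Lop v)"
  unfolding lin_def
proof (intro conjI allI)
  fix f g :: "'a vec"
  show "Lop v (\<lambda>u. f u + g u) = (\<lambda>u. Lop v f u + Lop v g u)"
    by (rule ext, case_tac u) auto
next
  fix c and f :: "'a vec"
  show "Lop v (\<lambda>u. c * f u) = (\<lambda>u. c * Lop v f u)"
    by (rule ext, case_tac u) auto
qed
lemma lin_prj: "lin (prj v)" unfolding lin_def prj_def by auto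


lemma lin_shift: "lin (\<lambda>f u. f (w # u))" unfolding lin_def by auto

primrec Alev :: "'v set \<Rightarrow> nat \<Rightarrow> 'v \<Rightarrow> 'v vec \<Rightarrow> 'v vec" where
  "Alev V 0 v f = f"
| "Alev V (Suc n) v f = (\<lambda>u. f u - Lop v (Alev V n v (\<lambda>u. 2 * f (v # u) - (\<Sum>w\<in>V. Alev V n w (\<lambda>u. f (w # u)) u))) u)"

lemma lin_Alev: "finite V \<Longrightarrow> lin (Alev V n v)"
proof (induction n arbitrary: v)
  case 0 then show ?case by (simp add: lin_def)
next
  case (Suc n)
  have IH: "lin (Alev V n w)" for w using Suc by blast
  have k: "lin (\<lambda>f u. 2 * f (v # u) - (\<Sum>w\<in>V. Alev V n w (\<lambda>u. f (w # u)) u))"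
    apply (rule lin_minus_ops)
     apply (rule lin_scale_ops)
     apply (rule lin_shift)
    apply (rule lin_sum_ops[OF Suc.prems])
    apply (rule lin_comp[OF IH lin_shift])
    done
  have "lin (\<lambda>f u. f u - Lop v (Alev V n v ((\<lambda>f u. 2 * f (v # u) - (\<Sum>w\<in>V. Alev V n w (\<lambda>u. f (w # u)) u)) f)) u)"
    apply (rule lin_minus_ops[OF lin_id])
    apply (rule lin_comp[OF lin_Lop])
    apply (rule lin_comp[OF IH k])
    done
  then show ?case by simp
qed

lemma Alev_local:
  fixes V :: "'v set" and f g :: "'v vec"
  shows "(\<forall>u'. length u' = n \<longrightarrow> f u' = g u') \<Longrightarrow> length u = n \<Longrightarrow> Alev V n v f u = Alev V n v g u"
proof (induction n arbitrary: f g u v)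
  case 0 then show ?case by simp
next
  case (Suc n)
  then obtain x u' where u: "u = x # u'" and lu: "length u' = n" by (cases u) auto
  have p: "\<forall>u''. length u'' = n \<longrightarrow> f (w # u'') = g (w # u'')" for w
    using Suc.prems by simp
  have p2: "\<forall>u''. length u'' = n \<longrightarrow> (\<Sum>w\<in>V. Alev V n w (\<lambda>u. f (w # u)) u'') = (\<Sum>w\<in>V. Alev V n w (\<lambda>u. g (w # u)) u'')"
  proof (intro allI impI sum.cong refl)
    fix u'' :: "'v list" and w :: 'v assume "length u'' = n"
    then show "Alev V n w (\<lambda>u. f (w # u)) u'' = Alev V n w (\<lambda>u. g (w # u)) u''"
      by (rule Suc.IH[OF p])
  qed
  have q: "\<forall>u''. length u'' = n \<longrightarrow> 2 * f (v # u'') - (\<Sum>w\<in>V. Alev V n w (\<lambda>u. f (w # u)) u'') =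
                                      2 * g (v # u'') - (\<Sum>w\<in>V. Alev V n w (\<lambda>u. g (w # u)) u'')"
    using p2 p by simp
  have r: "Alev V n v (\<lambda>u. 2 * f (v # u) - (\<Sum>w\<in>V. Alev V n w (\<lambda>u. f (w # u)) u)) u' =
           Alev V n v (\<lambda>u. 2 * g (v # u) - (\<Sum>w\<in>V. Alev V n w (\<lambda>u. g (w # u)) u)) u'"
    by (rule Suc.IH[OF q lu])
  have "f u = g u" using Suc.prems by simp
  then show ?case using r u by simp
qed

definition Aop :: "'v set \<Rightarrow> 'v \<Rightarrow> 'v vec \<Rightarrow> 'v vec" where
  "Aop V v f = (\<lambda>u. Alev V (length u) v f u)"

definition alph :: "'v set \<Rightarrow> 'v \<Rightarrow> 'v vec \<Rightarrow> 'v vec" where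
  "alph V v f = Aop V v (\<lambda>u. 2 * f (v # u) - (\<Sum>w\<in>V. Aop V w (\<lambda>u. f (w # u)) u))"

lemma Aop_local: "(\<forall>u'. length u' = length u \<longrightarrow> f u' = g u') \<Longrightarrow> Aop V v f u = Aop V v g u"
  unfolding Aop_def by (rule Alev_local) auto

lemma lin_Aop: "finite V \<Longrightarrow> lin (Aop V v)"
  using lin_Alev[of V _ v] unfolding lin_def Aop_def by (simp add: fun_eq_iff)

lemma Aop_Nil: "Aop V v f [] = f []" by (simp add: Aop_def)

lemma Aop_Cons: "Aop V v f (x # u) = f (x # u) - (if x = v then alph V v f u else 0)"
proof -
  have e: "Alev V (length u) v (\<lambda>u'. 2 * f (v # u') - (\<Sum>w\<in>V. Alev V (length u) w (\<lambda>u. f (w # u)) u')) u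
      = alph V v f u"
    unfolding Aop_def alph_def by (rule Alev_local) auto
  have "Aop V v f (x # u) = f (x # u) - Lop v (Alev V (length u) v (\<lambda>u'. 2 * f (v # u') - (\<Sum>w\<in>V. Alev V (length u) w (\<lambda>u. f (w # u)) u'))) (x # u)"
    by (simp add: Aop_def)
  also have "\<dots> = f (x # u) - (if x = v then alph V v f u else 0)"
    using e by simp
  finally show ?thesis .
qed

lemma Aop_eq: "Aop V v f = (\<lambda>u. f u - Lop v (alph V v f) u)"
proof
  fix u show "Aop V v f u = f u - Lop v (alph V v f) u"
    by (cases u) (auto simp: Aop_Nil Aop_Cons)
qed

lemma lin_alph: "finite V \<Longrightarrow> lin (alph V v)"
proof -
  assume fV: "finite V"
  have k: "lin (\<lambda>f u. 2 * f (v # u) - (\<Sum>w\<in>V. Aop V w (\<lambda>u. f (w # u)) u))"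
    apply (rule lin_minus_ops)
     apply (rule lin_scale_ops)
     apply (rule lin_shift)
    apply (rule lin_sum_ops[OF fV])
    apply (rule lin_comp[OF lin_Aop[OF fV] lin_shift])
    done
  have "lin (\<lambda>f. Aop V v ((\<lambda>f u. 2 * f (v # u) - (\<Sum>w\<in>V. Aop V w (\<lambda>u. f (w # u)) u)) f))"
    by (rule lin_comp[OF lin_Aop[OF fV] k])
  then show ?thesis unfolding alph_def by simp
qed


lemma alph_local:
  fixes V :: "'v set" and f g :: "'v vec"
  assumes "\<forall>u'. length u' = Suc (length u) \<longrightarrow> f u' = g u'"
  shows "alph V v f u = alph V v g u"
proof -
  have "\<forall>u'. length u' = length u \<longrightarrow>
     2 * f (v # u') - (\<Sum>w\<in>V. Aop V w (\<lambda>u. f (w # u)) u') = 2 * g (v # u') - (\<Sum>w\<in>V. Aop V w (\<lambda>u. g (w # u)) u')"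
  proof (intro allI impI)
    fix u' :: "'v list" assume l: "length u' = length u"
    have "Aop V w (\<lambda>u. f (w # u)) u' = Aop V w (\<lambda>u. g (w # u)) u'" for w
      by (rule Aop_local) (use assms l in auto)
    then show "2 * f (v # u') - (\<Sum>w\<in>V. Aop V w (\<lambda>u. f (w # u)) u') = 2 * g (v # u') - (\<Sum>w\<in>V. Aop V w (\<lambda>u. g (w # u)) u')"
      using assms l by simp
  qed
  then show ?thesis unfolding alph_def by (rule Aop_local)
qed

lemma alph_Lop:
  assumes fV: "finite V" and wV: "w \<in> V"
  shows "alph V v (Lop w t) = (\<lambda>u. (if v = w then 2 * Aop V v t u else 0) - Aop V v (Aop V w t) u)"
proof -
  have e1: "(\<lambda>u. Lop w t (x # u)) = (if x = w then t else (\<lambda>u. 0))" for x by auto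
  have e0: "Aop V x (\<lambda>u. 0) = (\<lambda>u. 0)" for x by (rule lin_zero[OF lin_Aop[OF fV]])
  have e2: "(\<Sum>x\<in>V. Aop V x (\<lambda>u. Lop w t (x # u)) u) = Aop V w t u" for u
  proof -
    have "(\<Sum>x\<in>V. Aop V x (\<lambda>u. Lop w t (x # u)) u) = (\<Sum>x\<in>V. if x = w then Aop V w t u else 0)"
      by (rule sum.cong) (auto simp: e1 e0)
    also have "\<dots> = Aop V w t u" using fV wV by simp
    finally show ?thesis .
  qed
  have e3: "(\<lambda>u. 2 * Lop w t (v # u) - (\<Sum>x\<in>V. Aop V x (\<lambda>u. Lop w t (x # u)) u))
          = (\<lambda>u. (if v = w then 2 * t u else 0) - Aop V w t u)"
    unfolding e2 by (auto simp: fun_eq_iff)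
  show ?thesis
  proof
    fix u
    have "alph V v (Lop w t) u = Aop V v (\<lambda>u. (if v = w then 2 * t u else 0) - Aop V w t u) u"
      unfolding alph_def e3 ..
    also have "\<dots> = Aop V v (\<lambda>u. (if v = w then 2 * t u else 0)) u - Aop V v (Aop V w t) u"
      by (rule lin_diffp[OF lin_Aop[OF fV]])
    also have "Aop V v (\<lambda>u. (if v = w then 2 * t u else 0)) u = (if v = w then 2 * Aop V v t u else 0)"
      by (cases "v = w") (simp_all add: lin_scalep[OF lin_Aop[OF fV]] lin_zerop[OF lin_Aop[OF fV]])
    finally show "alph V v (Lop w t) u = (if v = w then 2 * Aop V v t u else 0) - Aop V v (Aop V w t) u" .
  qed
qed

lemma Aop_alph_gen: "alph V v f = Aop V v (\<lambda>u. 2 * f (v # u) - (\<Sum>w\<in>V. Aop V w (\<lambda>u. f (w # u)) u))"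
  by (simp add: alph_def)

lemma idem_level:
  assumes fV: "finite V" and vV: "v \<in> V"
  shows "\<forall>f u. length u = n \<longrightarrow> Aop V v (Aop V v f) u = Aop V v f u"
proof (induction n)
  case 0 then show ?case by (simp add: Aop_Nil)
next
  case (Suc n)
  have G4: "Aop V v (alph V v f) u = alph V v f u" if "length u = n" for f u
    unfolding Aop_alph_gen using Suc that by blast
  have G7: "alph V v (Aop V v f) u = 0" if l: "length u = n" for f u
  proof -
    have "alph V v (Aop V v f) u = alph V v (\<lambda>u. f u - Lop v (alph V v f) u) u"
      by (subst Aop_eq) simp
    also have "\<dots> = alph V v f u - alph V v (Lop v (alph V v f)) u"
      by (rule lin_diffp[OF lin_alph[OF fV]])
    also have "alph V v (Lop v (alph V v f)) u = 2 * Aop V v (alph V v f) u - Aop V v (Aop V v (alph V v f)) u"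
      by (simp add: alph_Lop[OF fV vV])
    also have "\<dots> = alph V v f u" using Suc l G4[OF l] by simp
    finally show ?thesis by simp
  qed
  show ?case
  proof (intro allI impI)
    fix f and u :: "'a list" assume "length u = Suc n"
    then obtain x u' where u: "u = x # u'" and l: "length u' = n" by (cases u) auto
    show "Aop V v (Aop V v f) u = Aop V v f u"
      unfolding u Aop_Cons[of V v "Aop V v f"] using G7[OF l] by simp
  qed
qed

lemma Aop_idem: assumes "finite V" "v \<in> V" shows "Aop V v (Aop V v f) = Aop V v f"
proof
  fix u show "Aop V v (Aop V v f) u = Aop V v f u"
    using idem_level[OF assms, of "length u"] by simp
qed

lemma Aop_alph: "finite V \<Longrightarrow> v \<in> V \<Longrightarrow> Aop V v (alph V v f) = alph V v f"
  unfolding Aop_alph_gen by (simp add: Aop_idem)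

lemma alph_Aop: assumes fV: "finite V" and vV: "v \<in> V" shows "alph V v (Aop V v f) = (\<lambda>u. 0)"
proof
  fix u
  have "alph V v (Aop V v f) u = alph V v (\<lambda>u. f u - Lop v (alph V v f) u) u"
    by (subst Aop_eq) simp
  also have "\<dots> = alph V v f u - alph V v (Lop v (alph V v f)) u"
    by (rule lin_diffp[OF lin_alph[OF fV]])
  also have "alph V v (Lop v (alph V v f)) u = alph V v f u"
    by (simp add: alph_Lop[OF fV vV] Aop_idem[OF fV vV] Aop_alph[OF fV vV])
  finally show "alph V v (Aop V v f) u = 0" by simp
qed

lemma alph_alph: "finite V \<Longrightarrow> v \<in> V \<Longrightarrow> alph V v (alph V v f) = (\<lambda>u. 0)"
  by (subst Aop_alph[symmetric]) (simp_all add: alph_Aop)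


definition par :: "bool \<Rightarrow> 'v vec \<Rightarrow> bool" where
  "par p h \<longleftrightarrow> (\<forall>u. even (length u) \<noteq> p \<longrightarrow> h u = 0)"

lemma par_Aop: fixes h :: "'v vec" assumes fV: "finite V" and h: "par p h" shows "par p (Aop V v h)"
  unfolding par_def
proof (intro allI impI)
  fix u :: "'v list" assume u: "even (length u) \<noteq> p"
  have "Aop V v h u = Aop V v (\<lambda>u. 0) u"
    by (rule Aop_local) (use h u in \<open>auto simp: par_def\<close>)
  then show "Aop V v h u = 0" by (simp add: lin_zerop[OF lin_Aop[OF fV]])
qed

lemma par_alph: fixes h :: "'v vec" assumes fV: "finite V" and h: "par p h" shows "par (\<not> p) (alph V v h)"
  unfolding par_def
proof (intro allI impI)
  fix u :: "'v list" assume u: "even (length u) \<noteq> (\<not> p)"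
  have "alph V v h u = alph V v (\<lambda>u. 0) u"
    by (rule alph_local) (use h u in \<open>auto simp: par_def\<close>)
  then show "alph V v h u = 0" by (simp add: lin_zerop[OF lin_alph[OF fV]])
qed

lemma par_Lop: fixes h :: "'v vec" shows "par p h \<Longrightarrow> par (\<not> p) (Lop v h)"
  unfolding par_def
proof (intro allI impI)
  fix u :: "'v list" assume h: "\<forall>u. even (length u) \<noteq> p \<longrightarrow> h u = 0" and u: "even (length u) \<noteq> (\<not> p)"
  show "Lop v h u = 0"
  proof (cases u)
    case Nil then show ?thesis by simp
  next
    case (Cons x u')
    then show ?thesis using h u by auto
  qed
qed

lemma par_neg: "par p h \<Longrightarrow> par p (\<lambda>u. - h u)" unfolding par_def by auto

definition chi :: "bool \<Rightarrow> 'v vec \<Rightarrow> 'v vec" where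
  "chi p f = (\<lambda>u. if even (length u) = p then f u else 0)"

lemma par_chi: "par p (chi p f)" unfolding par_def chi_def by auto

definition hlf :: complex where "hlf = 1 / 2"

definition Dop :: "'v set \<Rightarrow> 'v \<Rightarrow> complex \<Rightarrow> 'v vec \<Rightarrow> 'v vec" where
  "Dop V v s g = (\<lambda>u. hlf * (Aop V v g u + s * alph V v g u))"
definition Hop :: "'v set \<Rightarrow> 'v \<Rightarrow> bool \<Rightarrow> complex \<Rightarrow> 'v vec \<Rightarrow> 'v vec" where
  "Hop V v p s g = chi p (Dop V v s g)"
definition Qop :: "'v set \<Rightarrow> 'v \<Rightarrow> bool \<Rightarrow> complex \<Rightarrow> 'v vec \<Rightarrow> 'v vec" where
  "Qop V v p s g = (\<lambda>u. Hop V v p s g u + s * Lop v (Hop V v p s g) u)"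

lemma Aop_Dop: assumes fV: "finite V" and vV: "v \<in> V" shows "Aop V v (Dop V v s g) = Dop V v s g"
proof
  fix u
  have "Aop V v (Dop V v s g) u = hlf * (Aop V v (Aop V v g) u + s * Aop V v (alph V v g) u)"
    unfolding Dop_def by (simp only: lin_scalep[OF lin_Aop[OF fV]] lin_addp[OF lin_Aop[OF fV]])
  then show "Aop V v (Dop V v s g) u = Dop V v s g u"
    by (simp add: Dop_def Aop_idem[OF fV vV] Aop_alph[OF fV vV])
qed

lemma Aop_chi: fixes f :: "'v vec" assumes fV: "finite V" shows "Aop V v (chi p f) = chi p (Aop V v f)"
proof
  fix u :: "'v list"
  show "Aop V v (chi p f) u = chi p (Aop V v f) u"
  proof (cases "even (length u) = p")
    case True
    have "Aop V v (chi p f) u = Aop V v f u"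
      by (rule Aop_local) (use True in \<open>auto simp: chi_def\<close>)
    then show ?thesis using True by (simp add: chi_def)
  next
    case False
    have "Aop V v (chi p f) u = Aop V v (\<lambda>u. 0) u"
      by (rule Aop_local) (use False in \<open>auto simp: chi_def\<close>)
    then show ?thesis using False by (simp add: chi_def lin_zerop[OF lin_Aop[OF fV]])
  qed
qed

lemma alph_chi_zero:
  fixes f :: "'v vec"
  assumes fV: "finite V" and z: "alph V v f = (\<lambda>u. 0)"
  shows "alph V v (chi p f) = (\<lambda>u. 0)"
proof
  fix u :: "'v list"
  show "alph V v (chi p f) u = 0"
  proof (cases "even (Suc (length u)) = p")
    case True
    have "alph V v (chi p f) u = alph V v f u"
      by (rule alph_local) (use True in \<open>auto simp: chi_def\<close>)
    then show ?thesis using z by simp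
  next
    case False
    have "alph V v (chi p f) u = alph V v (\<lambda>u. 0) u"
      by (rule alph_local) (use False in \<open>auto simp: chi_def\<close>)
    then show ?thesis by (simp add: lin_zerop[OF lin_alph[OF fV]])
  qed
qed

lemma Aop_Hop: "finite V \<Longrightarrow> v \<in> V \<Longrightarrow> Aop V v (Hop V v p s g) = Hop V v p s g"
  unfolding Hop_def by (simp add: Aop_chi Aop_Dop)

lemma alph_Dop: assumes fV: "finite V" and vV: "v \<in> V" shows "alph V v (Dop V v s g) = (\<lambda>u. 0)"
proof
  fix u
  have "alph V v (Dop V v s g) u = hlf * (alph V v (Aop V v g) u + s * alph V v (alph V v g) u)"
    unfolding Dop_def by (simp only: lin_scalep[OF lin_alph[OF fV]] lin_addp[OF lin_alph[OF fV]])
  then show "alph V v (Dop V v s g) u = 0"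
    by (simp add: alph_Aop[OF fV vV] alph_alph[OF fV vV])
qed

lemma alph_Hop: "finite V \<Longrightarrow> v \<in> V \<Longrightarrow> alph V v (Hop V v p s g) = (\<lambda>u. 0)"
  unfolding Hop_def by (rule alph_chi_zero) (simp_all add: alph_Dop)

lemma par_Hop: "par p (Hop V v p s g)" unfolding Hop_def by (rule par_chi)

lemma Aop_Lop_pt: "Aop V v (Lop w t) u = Lop w t u - Lop v (alph V v (Lop w t)) u"
  by (subst Aop_eq) simp

lemma parD: "par p h \<Longrightarrow> even (length u) \<noteq> p \<Longrightarrow> h u = 0"
  unfolding par_def by blast

lemma Dop_expand:
  assumes fV: "finite V"
  shows "Dop V v s (\<lambda>u. h u + c * Lop w h u) u =
    hlf * ((Aop V v h u + c * Aop V v (Lop w h) u) + s * (alph V v h u + c * alph V v (Lop w h) u))"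
  unfolding Dop_def
  by (simp only: lin_scalep[OF lin_Aop[OF fV]] lin_addp[OF lin_Aop[OF fV]]
          lin_scalep[OF lin_alph[OF fV]] lin_addp[OF lin_alph[OF fV]])

lemma Lop_zero: "Lop v (\<lambda>u. 0) = (\<lambda>u. 0)"
  by (rule ext, case_tac u) auto

lemma Qop_zero: "(\<And>u. Hop V v p s g u = 0) \<Longrightarrow> Qop V v p s g = (\<lambda>u. 0)"
proof -
  assume z: "\<And>u. Hop V v p s g u = 0"
  then have "Hop V v p s g = (\<lambda>u. 0)" by auto
  then show ?thesis unfolding Qop_def by (simp add: Lop_zero)
qed

lemma Qop_orth_vert:
  assumes fV: "finite V" and vV: "v \<in> V" and wV: "w \<in> V" and vw: "v \<noteq> w" and ss: "s * s = 1"
  shows "Qop V v p s (Qop V w p s g) = (\<lambda>u. 0)"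
proof (rule Qop_zero)
  define h where "h = Hop V w p s g"
  have hA: "Aop V w h = h" unfolding h_def by (rule Aop_Hop[OF fV wV])
  have hp: "par p h" unfolding h_def by (rule par_Hop)
  have aL: "alph V v (Lop w h) = (\<lambda>u. - Aop V v h u)"
    using vw by (simp add: alph_Lop[OF fV wV] hA)
  have Q: "Qop V w p s g = (\<lambda>u. h u + s * Lop w h u)" unfolding Qop_def h_def ..
  fix u
  show "Hop V v p s (Qop V w p s g) u = 0"
  proof (cases "even (length u) = p")
    case False then show ?thesis by (simp add: Hop_def chi_def)
  next
    case True
    have z1: "Lop w h u = 0" by (rule parD[OF par_Lop[OF hp]]) (use True in simp)
    have z2: "Lop v (\<lambda>u. - Aop V v h u) u = 0"
      by (rule parD[OF par_Lop[OF par_neg[OF par_Aop[OF fV hp]]]]) (use True in simp)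
    have z3: "alph V v h u = 0" by (rule parD[OF par_alph[OF fV hp]]) (use True in simp)
    have "Hop V v p s (Qop V w p s g) u = Dop V v s (\<lambda>u. h u + s * Lop w h u) u"
      using True unfolding Q by (simp add: Hop_def chi_def)
    also have "\<dots> = hlf * ((Aop V v h u + s * Aop V v (Lop w h) u) + s * (alph V v h u + s * alph V v (Lop w h) u))"
      by (rule Dop_expand[OF fV])
    also have "Aop V v (Lop w h) u = 0" unfolding Aop_Lop_pt aL z1 z2 by simp
    also have "alph V v (Lop w h) u = - Aop V v h u" unfolding aL ..
    finally have "Hop V v p s (Qop V w p s g) u = hlf * (Aop V v h u - (s * s) * Aop V v h u)"
      unfolding z3 by (simp add: algebra_simps)
    then show ?thesis using ss by simp
  qed
qed


lemma Dop_same: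
  assumes fV: "finite V" and vV: "v \<in> V"
  shows "Dop V v s (\<lambda>u. Hop V v q s' g u + s' * Lop v (Hop V v q s' g) u) u = hlf * (Hop V v q s' g u + s * s' * Hop V v q s' g u)"
proof -
  define h where "h = Hop V v q s' g"
  have hA: "Aop V v h = h" unfolding h_def by (rule Aop_Hop[OF fV vV])
  have ha: "alph V v h = (\<lambda>u. 0)" unfolding h_def by (rule alph_Hop[OF fV vV])
  have aL: "alph V v (Lop v h) = h"
    by (simp add: alph_Lop[OF fV vV] hA)
  have AL: "Aop V v (Lop v h) u = 0" unfolding Aop_Lop_pt aL by simp
  have "Dop V v s (\<lambda>u. h u + s' * Lop v h u) u = hlf * ((Aop V v h u + s' * Aop V v (Lop v h) u) + s * (alph V v h u + s' * alph V v (Lop v h) u))"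
    by (rule Dop_expand[OF fV])
  also have "\<dots> = hlf * (h u + s * s' * h u)" unfolding AL aL hA ha by simp
  finally show ?thesis unfolding h_def .
qed

lemma Qop_orth_same:
  assumes fV: "finite V" and vV: "v \<in> V" and ss: "s * s = 1"
  shows "Qop V v p s (Qop V v p (- s) g) = (\<lambda>u. 0)"
proof (rule Qop_zero)
  fix u
  have "Hop V v p s (Qop V v p (- s) g) u = chi p (Dop V v s (Qop V v p (- s) g)) u" unfolding Hop_def ..
  also have "\<dots> = chi p (\<lambda>u. hlf * (Hop V v p (-s) g u + s * (- s) * Hop V v p (-s) g u)) u"
    unfolding chi_def Qop_def[of V v p "- s"] Dop_same[OF fV vV] ..
  also have "\<dots> = 0" using ss by (simp add: chi_def)
  finally show "Hop V v p s (Qop V v p (- s) g) u = 0" .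
qed

lemma Qop_orth_par:
  assumes fV: "finite V" and vV: "v \<in> V"
  shows "Qop V v p s (Qop V v (\<not> p) s' g) = (\<lambda>u. 0)"
proof (rule Qop_zero)
  fix u
  have "Hop V v p s (Qop V v (\<not> p) s' g) u = chi p (Dop V v s (Qop V v (\<not> p) s' g)) u" unfolding Hop_def ..
  also have "\<dots> = chi p (\<lambda>u. hlf * (Hop V v (\<not> p) s' g u + s * s' * Hop V v (\<not> p) s' g u)) u"
    unfolding chi_def Qop_def[of V v "\<not> p" s'] Dop_same[OF fV vV] ..
  also have "\<dots> = 0" by (simp add: chi_def Hop_def)
  finally show "Hop V v p s (Qop V v (\<not> p) s' g) u = 0" .
qed

lemma Qop_sum:
  "Qop V v True 1 g u + Qop V v True (-1) g u + Qop V v False 1 g u + Qop V v False (-1) g u = g u"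
proof (cases u)
  case Nil then show ?thesis
    by (simp add: Qop_def Hop_def chi_def Dop_def hlf_def Aop_Nil algebra_simps)
next
  case (Cons x u')
  show ?thesis
    unfolding Cons Aop_Cons[of V v g x u', symmetric] Qop_def Hop_def chi_def Dop_def hlf_def
    by (cases "even (length u')") (auto simp: Aop_Cons algebra_simps)
qed

definition sgn4 :: "nat \<Rightarrow> complex" where "sgn4 a = (if even a then 1 else -1)"
definition Pop :: "'v set \<Rightarrow> 'v \<Rightarrow> nat \<Rightarrow> 'v vec \<Rightarrow> 'v vec" where
  "Pop V v a = Qop V v (a < 2) (sgn4 a)"

lemma lin_chi: "lin (chi p)" unfolding lin_def chi_def by (auto simp: fun_eq_iff)

lemma lin_Qop: "finite V \<Longrightarrow> lin (Qop V v p s)"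
proof -
  assume fV: "finite V"
  have lD: "lin (Dop V v s)"
  proof -
    have "lin (\<lambda>f u. hlf * (Aop V v f u + s * alph V v f u))"
      by (intro lin_scale_ops lin_plus_ops lin_Aop[OF fV] lin_alph[OF fV])
    then show ?thesis unfolding Dop_def .
  qed
  have lH: "lin (Hop V v p s)"
    using lin_comp[OF lin_chi lD] unfolding Hop_def .
  have "lin (\<lambda>f u. Hop V v p s f u + s * Lop v (Hop V v p s f) u)"
    by (intro lin_plus_ops lin_scale_ops lH lin_comp[OF lin_Lop lH])
  then show ?thesis unfolding Qop_def .
qed

lemma lin_Pop: "finite V \<Longrightarrow> lin (Pop V v a)" unfolding Pop_def by (rule lin_Qop)

lemma Pop_sum: "(\<Sum>a<4. Pop V v a g u) = g u"
proof -
  have "(\<Sum>a<4. Pop V v a g u) = Qop V v True 1 g u + Qop V v True (-1) g u + Qop V v False 1 g u + Qop V v False (-1) g u"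
  proof -
    have e: "{..<4::nat} = {0,1,2,3}" by auto
    show ?thesis unfolding e by (simp add: Pop_def sgn4_def)
  qed
  then show ?thesis using Qop_sum by simp
qed

lemma Pop_orth_same:
  assumes fV: "finite V" and vV: "v \<in> V" and ab: "a < 4" "b < 4" "a \<noteq> b"
  shows "Pop V v a (Pop V v b g) = (\<lambda>u. 0)"
proof (cases "(a < 2) = (b < 2)")
  case True
  have a4: "a = 0 \<or> a = 1 \<or> a = 2 \<or> a = 3" and b4: "b = 0 \<or> b = 1 \<or> b = 2 \<or> b = 3" using ab by auto
  then have sb: "sgn4 b = - sgn4 a" and ss: "sgn4 a * sgn4 a = 1" using ab True by (auto simp: sgn4_def)
  show ?thesis unfolding Pop_def sb True[symmetric] by (rule Qop_orth_same[OF fV vV ss])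
next
  case False
  then have e: "(b < 2) = (\<not> (a < 2))" by auto
  show ?thesis unfolding Pop_def e by (rule Qop_orth_par[OF fV vV])
qed

lemma Pop_orth_vert:
  assumes fV: "finite V" and vV: "v \<in> V" and wV: "w \<in> V" and vw: "v \<noteq> w"
  shows "Pop V v a (Pop V w a g) = (\<lambda>u. 0)"
  unfolding Pop_def by (rule Qop_orth_vert[OF fV vV wV vw]) (simp add: sgn4_def)

lemma Pop_idem:
  assumes fV: "finite V" and vV: "v \<in> V" and a: "a < 4"
  shows "Pop V v a (Pop V v a g) = Pop V v a g"
proof -
  have "Pop V v a g = Pop V v a (\<lambda>u. \<Sum>b<4. Pop V v b g u)"
    by (simp add: Pop_sum)
  also have "\<dots> = (\<lambda>u. \<Sum>b<4. Pop V v a (Pop V v b g) u)"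
    by (rule lin_sum[OF lin_Pop[OF fV]]) simp
  also have "\<dots> = (\<lambda>u. \<Sum>b\<in>{a}. Pop V v a (Pop V v b g) u)"
  proof (rule ext, rule sum.mono_neutral_right)
    fix u show "\<forall>i\<in>{..<4} - {a}. Pop V v a (Pop V v i g) u = 0"
      using Pop_orth_same[OF fV vV a] by auto
  qed (use a in auto)
  finally show ?thesis by simp
qed



lemma i4: "\<i> ^ 4 = (1::complex)"
  by (simp add: power_mult_distrib numeral_eq_Suc)

lemma i_pow_mod: "\<i> ^ n = \<i> ^ (n mod 4)"
proof -
  have e: "4 * (n div 4) + n mod 4 = n" by simp
  have "\<i> ^ n = \<i> ^ (4 * (n div 4) + n mod 4)" by (simp only: e)
  also have "\<dots> = (\<i> ^ 4) ^ (n div 4) * \<i> ^ (n mod 4)" by (simp only: power_add power_mult)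
  also have "\<dots> = \<i> ^ (n mod 4)" by (simp only: i4 power_one mult_1)
  finally show ?thesis .
qed

definition Uop :: "'v set \<Rightarrow> 'v \<Rightarrow> nat \<Rightarrow> 'v vec \<Rightarrow> 'v vec" where
  "Uop V v k g = (\<lambda>u. \<Sum>a<4. \<i> ^ (a * k) * Pop V v a g u)"

lemma lin_Uop: "finite V \<Longrightarrow> lin (Uop V v k)"
proof -
  assume fV: "finite V"
  have "lin (\<lambda>f u. \<Sum>a<4. \<i> ^ (a * k) * Pop V v a f u)"
    by (rule lin_sum_ops) (auto intro: lin_scale_ops lin_Pop[OF fV])
  then show ?thesis unfolding Uop_def .
qed

lemma Uop_mod: "Uop V v k = Uop V v (k mod 4)"
proof -
  have "\<i> ^ (a * k) = \<i> ^ (a * (k mod 4))" for a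
    by (subst i_pow_mod) (subst (2) i_pow_mod, simp add: mod_mult_right_eq)
  then show ?thesis unfolding Uop_def by simp
qed

lemma Uop_0: "Uop V v 0 g = g"
  unfolding Uop_def by (simp add: Pop_sum)

lemma Pop_on_Pop_sum:
  assumes fV: "finite V" and vV: "v \<in> V" and a: "a < 4"
  shows "Pop V v a (\<lambda>u. \<Sum>b<4. c b * Pop V v b g u) = (\<lambda>u. c a * Pop V v a g u)"
proof
  fix u
  have "Pop V v a (\<lambda>u. \<Sum>b<4. c b * Pop V v b g u) u = (\<Sum>b<4. Pop V v a (\<lambda>u. c b * Pop V v b g u) u)"
    by (rule lin_sump[OF lin_Pop[OF fV]]) simp
  also have "\<dots> = (\<Sum>b<4. c b * Pop V v a (Pop V v b g) u)"
    by (simp add: lin_scalep[OF lin_Pop[OF fV]])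
  also have "\<dots> = (\<Sum>b\<in>{a}. c b * Pop V v a (Pop V v b g) u)"
    by (rule sum.mono_neutral_right) (use a Pop_orth_same[OF fV vV a] in auto)
  also have "\<dots> = c a * Pop V v a g u" by (simp add: Pop_idem[OF fV vV a])
  finally show "Pop V v a (\<lambda>u. \<Sum>b<4. c b * Pop V v b g u) u = c a * Pop V v a g u" .
qed

lemma Uop_comp:
  assumes fV: "finite V" and vV: "v \<in> V"
  shows "Uop V v k (Uop V v j g) = Uop V v (k + j) g"
proof
  fix u
  have "Uop V v k (Uop V v j g) u = (\<Sum>a<4. \<i> ^ (a * k) * (\<i> ^ (a * j) * Pop V v a g u))"
    unfolding Uop_def[of V v j] by (simp add: Uop_def Pop_on_Pop_sum[OF fV vV])
  then show "Uop V v k (Uop V v j g) u = Uop V v (k + j) g u"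
    by (simp add: Uop_def algebra_simps power_add)
qed

primrec PiW :: "'v set \<Rightarrow> ('v \<times> nat) list \<Rightarrow> 'v vec \<Rightarrow> 'v vec" where
  "PiW V [] g = g"
| "PiW V (l # w) g = Uop V (fst l) (snd l) (PiW V w g)"

lemma lin_PiW: "finite V \<Longrightarrow> lin (PiW V w)"
proof (induction w)
  case Nil then show ?case by (simp add: lin_id)
next
  case (Cons l w)
  have "lin (\<lambda>g. Uop V (fst l) (snd l) (PiW V w g))"
    by (rule lin_comp[OF lin_Uop[OF Cons.prems] Cons.IH[OF Cons.prems]])
  then show ?case by simp
qed

lemma PiW_append: "PiW V (xs @ ys) g = PiW V xs (PiW V ys g)"
  by (induction xs) auto

definition goodw :: "'v set \<Rightarrow> ('v \<times> nat) list \<Rightarrow> bool" where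
  "goodw V w \<longleftrightarrow> (\<forall>(v,k)\<in>set w. v \<in> V \<and> 0 < k \<and> k < 4)"

lemma goodw_Nil[simp]: "goodw V []" by (simp add: goodw_def)
lemma goodw_Cons[simp]: "goodw V ((v,k) # w) \<longleftrightarrow> v \<in> V \<and> 0 < k \<and> k < 4 \<and> goodw V w"
  by (simp add: goodw_def)

lemma PiW_ins:
  assumes fV: "finite V" and vV: "v \<in> V"
  shows "PiW V (ins_letter 4 (v,k) w) g = Uop V v k (PiW V w g)"
proof (cases w)
  case Nil
  then show ?thesis by (auto simp: Uop_0 Uop_mod[of V v k])
next
  case (Cons l w')
  obtain u j where l: "l = (u, j)" by (cases l)
  show ?thesis
  proof (cases "u = v")
    case True
    have c: "Uop V v k (Uop V v j X) = Uop V v ((k + j) mod 4) X" for X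
      using Uop_comp[OF fV vV] Uop_mod by metis
    show ?thesis
    proof (cases "(k + j) mod 4 = 0")
      case z: True
      have "Uop V v k (Uop V v j (PiW V w' g)) = PiW V w' g" unfolding c z by (simp add: Uop_0)
      then show ?thesis using Cons l True z by simp
    next
      case nz: False
      have "Uop V v k (Uop V v j (PiW V w' g)) = Uop V v ((k + j) mod 4) (PiW V w' g)" unfolding c ..
      then show ?thesis using Cons l True nz by simp
    qed
  next
    case False
    then show ?thesis using Cons l by (auto simp: Uop_0 Uop_mod[of V v k])
  qed
qed

lemma PiW_mult:
  assumes fV: "finite V" and gx: "goodw V x"
  shows "PiW V (word_mult 4 x y) g = PiW V x (PiW V y g)"
  using gx
proof (induction x arbitrary: g)
  case Nil then show ?case by (simp add: word_mult_def)
next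
  case (Cons l x)
  obtain v k where l: "l = (v, k)" by (cases l)
  have "PiW V (word_mult 4 (l # x) y) g = PiW V (ins_letter 4 (v,k) (word_mult 4 x y)) g"
    by (simp add: word_mult_def l)
  also have "\<dots> = Uop V v k (PiW V (word_mult 4 x y) g)"
    using Cons.prems l by (simp add: PiW_ins[OF fV])
  also have "\<dots> = PiW V (l # x) (PiW V y g)"
    using Cons l by simp
  finally show ?case .
qed



definition supp :: "(('v \<times> nat) list \<Rightarrow> complex) \<Rightarrow> ('v \<times> nat) list set" where
  "supp f = {w. f w \<noteq> 0}"

definition fin_good :: "'v set \<Rightarrow> (('v \<times> nat) list \<Rightarrow> complex) \<Rightarrow> bool" where
  "fin_good V f \<longleftrightarrow> finite (supp f) \<and> (\<forall>w. f w \<noteq> 0 \<longrightarrow> goodw V w)"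

definition piA :: "'v set \<Rightarrow> (('v \<times> nat) list \<Rightarrow> complex) \<Rightarrow> 'v vec \<Rightarrow> 'v vec" where
  "piA V f g = (\<lambda>u. \<Sum>w\<in>supp f. f w * PiW V w g u)"

definition rho :: "'v set \<Rightarrow> (('v \<times> nat) list \<Rightarrow> complex) \<Rightarrow> 'v vec \<Rightarrow> 'v vec" where
  "rho V f g = (\<lambda>u. \<Sum>w\<in>supp f. cnj (f w) * PiW V (word_inv 4 w) g u)"

lemma goodw_ins: "v \<in> V \<Longrightarrow> goodw V w \<Longrightarrow> goodw V (ins_letter 4 (v,k) w)"
proof (cases w)
  case Nil
  assume "v \<in> V"
  moreover have "k mod 4 < 4" by simp
  ultimately show ?thesis using Nil by (auto simp del: mod_less)
next
  case (Cons l w')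
  assume vV: "v \<in> V" and g: "goodw V w"
  obtain u j where l: "l = (u, j)" by (cases l)
  have g': "u \<in> V" "0 < j" "j < 4" "goodw V w'" using g Cons l by auto
  define r where "r = (k + j) mod 4"
  define s where "s = k mod 4"
  have r4: "r < 4" "s < 4" by (simp_all add: r_def s_def)
  have e: "ins_letter 4 (v,k) w = (if u = v then (if r = 0 then w' else (v, r) # w')
              else if s = 0 then (u,j) # w' else (v,s) # (u,j) # w')"
    unfolding Cons l r_def s_def by simp
  show ?thesis unfolding e using g' vV r4 by auto
qed

lemma goodw_mult: "goodw V x \<Longrightarrow> goodw V y \<Longrightarrow> goodw V (word_mult 4 x y)"
proof (induction x)
  case Nil then show ?case by (simp add: word_mult_def)
next
  case (Cons l x)
  obtain v k where l: "l = (v, k)" by (cases l)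
  have "word_mult 4 (l # x) y = ins_letter 4 (v,k) (word_mult 4 x y)" by (simp add: word_mult_def l)
  then show ?case using Cons l goodw_ins by auto
qed

lemma word_inv_Cons: "word_inv m ((v,k) # w) = word_inv m w @ [(v, m - k)]"
  by (simp add: word_inv_def)
lemma word_inv_Nil[simp]: "word_inv m [] = []"
  by (simp add: word_inv_def)

lemma goodw_inv: "goodw V w \<Longrightarrow> goodw V (word_inv 4 w)"
  by (auto simp: goodw_def word_inv_def)

lemma goodw_inv_rev: "goodw V (word_inv 4 w) \<Longrightarrow> goodw V w"
  by (auto simp: goodw_def word_inv_def)

lemma inv_inv: "goodw V w \<Longrightarrow> word_inv 4 (word_inv 4 w) = w"
proof (induction w)
  case Nil then show ?case by simp
next
  case (Cons l w)
  obtain v k where l: "l = (v, k)" by (cases l)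
  then show ?case using Cons by (auto simp: word_inv_def rev_map comp_def)
qed

lemma PiW_single: "PiW V [(v,c)] g = Uop V v c g" by simp

lemma PiW_inv_ins:
  assumes fV: "finite V" and vV: "v \<in> V" and k: "0 < k" "k < 4" and gw: "goodw V w"
  shows "PiW V (word_inv 4 (ins_letter 4 (v,k) w)) g = PiW V (word_inv 4 w) (Uop V v (4 - k) g)"
proof -
  have km: "k mod 4 = k" using k by simp
  have kn: "k \<noteq> 0" using k by simp
  show ?thesis
proof (cases w)
  case Nil
  have i0: "ins_letter 4 (v,k) [] = [(v,k)]" by (simp only: ins_letter.simps km kn if_False)
  show ?thesis unfolding Nil i0 word_inv_Cons word_inv_Nil PiW_append by simp
next
  case (Cons l w')
  obtain u j where l: "l = (u, j)" by (cases l)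
  have j: "0 < j" "j < 4" "u \<in> V" using gw Cons l by auto
  have jj: "j = 1 \<or> j = 2 \<or> j = 3" using j by auto
  have kk: "k = 1 \<or> k = 2 \<or> k = 3" using k by auto
  show ?thesis
  proof (cases "u = v")
    case True
    have c: "Uop V v (4 - j) (Uop V v (4 - k) X) = Uop V v ((8 - j - k) mod 4) X" for X
    proof -
      have ar: "(4 - j + (4 - k)) mod 4 = (8 - j - k) mod 4" using jj kk by (elim disjE) simp_all
      have "Uop V v (4 - j) (Uop V v (4 - k) X) = Uop V v (4 - j + (4 - k)) X"
        by (rule Uop_comp[OF fV vV])
      also have "\<dots> = Uop V v ((4 - j + (4 - k)) mod 4) X" by (rule fun_cong[OF Uop_mod])
      finally show ?thesis unfolding ar .
    qed
    show ?thesis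
    proof (cases "(k + j) mod 4 = 0")
      case z: True
      have e0: "(8 - j - k) mod 4 = 0" using jj kk z by (elim disjE) simp_all
      have i1: "ins_letter 4 (v,k) w = w'" using Cons l True z by simp
      have "PiW V (word_inv 4 w) (Uop V v (4 - k) g) = PiW V (word_inv 4 w') (Uop V v (4 - j) (Uop V v (4 - k) g))"
        unfolding Cons l True word_inv_Cons PiW_append PiW_single ..
      also have "\<dots> = PiW V (word_inv 4 w') g" unfolding c e0 Uop_0 ..
      finally show ?thesis unfolding i1 by simp
    next
      case nz: False
      have e: "(8 - j - k) mod 4 = (4 - (k + j) mod 4) mod 4" using jj kk by (elim disjE) simp_all
      have e2: "Uop V v ((8 - j - k) mod 4) = Uop V v (4 - (k + j) mod 4)"
      proof -
        have "Uop V v ((8 - j - k) mod 4) = Uop V v ((4 - (k + j) mod 4) mod 4)" unfolding e ..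
        also have "\<dots> = Uop V v (4 - (k + j) mod 4)" by (rule Uop_mod[symmetric])
        finally show ?thesis .
      qed
      have i1: "ins_letter 4 (v,k) w = (v, (k + j) mod 4) # w'" using Cons l True nz by simp
      have "PiW V (word_inv 4 (ins_letter 4 (v,k) w)) g = PiW V (word_inv 4 w') (Uop V v (4 - (k + j) mod 4) g)"
        unfolding i1 word_inv_Cons PiW_append PiW_single ..
      also have "\<dots> = PiW V (word_inv 4 w') (Uop V v (4 - j) (Uop V v (4 - k) g))"
        unfolding c e2 ..
      also have "\<dots> = PiW V (word_inv 4 w) (Uop V v (4 - k) g)"
        unfolding Cons l True word_inv_Cons PiW_append PiW_single ..
      finally show ?thesis .
    qed
  next
    case False
    have i2: "ins_letter 4 (v,k) w = (v,k) # w" unfolding Cons l using False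
      by (simp only: ins_letter.simps km kn if_False)
    show ?thesis unfolding i2 word_inv_Cons PiW_append by simp
  qed
qed
qed

lemma PiW_inv_mult:
  assumes fV: "finite V" and gx: "goodw V x" and gy: "goodw V y"
  shows "PiW V (word_inv 4 (word_mult 4 x y)) g = PiW V (word_inv 4 y) (PiW V (word_inv 4 x) g)"
  using gx
proof (induction x arbitrary: g)
  case Nil then show ?case by (simp add: word_mult_def)
next
  case (Cons l x)
  obtain v k where l: "l = (v, k)" by (cases l)
  have gv: "v \<in> V" "0 < k" "k < 4" "goodw V x" using Cons.prems l by auto
  have "PiW V (word_inv 4 (word_mult 4 (l # x) y)) g = PiW V (word_inv 4 (ins_letter 4 (v,k) (word_mult 4 x y))) g"
    by (simp add: word_mult_def l)
  also have "\<dots> = PiW V (word_inv 4 (word_mult 4 x y)) (Uop V v (4 - k) g)"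
    using gv by (simp add: PiW_inv_ins[OF fV] goodw_mult gy)
  also have "\<dots> = PiW V (word_inv 4 y) (PiW V (word_inv 4 x) (Uop V v (4 - k) g))"
    using Cons.IH gv by simp
  also have "\<dots> = PiW V (word_inv 4 y) (PiW V (word_inv 4 (l # x)) g)"
    by (simp add: l word_inv_Cons PiW_append)
  finally show ?case .
qed


lemma piA_sub:
  assumes "finite W" "supp f \<subseteq> W"
  shows "piA V f g u = (\<Sum>w\<in>W. f w * PiW V w g u)"
  unfolding piA_def using assms by (intro sum.mono_neutral_left) (auto simp: supp_def)

lemma rho_sub:
  assumes "finite W" "supp f \<subseteq> W"
  shows "rho V f g u = (\<Sum>w\<in>W. cnj (f w) * PiW V (word_inv 4 w) g u)"
  unfolding rho_def using assms by (intro sum.mono_neutral_left) (auto simp: supp_def)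

lemma supp_gmult: "supp (gmult 4 f h) \<subseteq> (\<lambda>(x,y). word_mult 4 x y) ` (supp f \<times> supp h)"
proof
  fix w assume "w \<in> supp (gmult 4 f h)"
  then have "(\<Sum>(x,y)\<in>{(x,y). f x \<noteq> 0 \<and> h y \<noteq> 0 \<and> word_mult 4 x y = w}. f x * h y) \<noteq> 0"
    by (simp add: supp_def gmult_def)
  then obtain p where "p \<in> {(x,y). f x \<noteq> 0 \<and> h y \<noteq> 0 \<and> word_mult 4 x y = w}"
    by (metis (no_types, lifting) empty_iff equals0I sum.empty)
  then show "w \<in> (\<lambda>(x,y). word_mult 4 x y) ` (supp f \<times> supp h)"
    by (auto simp: supp_def image_iff)
qed

lemma gmult_sum:
  assumes ff: "finite (supp f)" and fh: "finite (supp h)"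
  shows "(\<Sum>w\<in>(\<lambda>(x,y). word_mult 4 x y) ` (supp f \<times> supp h). gmult 4 f h w * \<Phi> w)
       = (\<Sum>p\<in>supp f \<times> supp h. f (fst p) * h (snd p) * \<Phi> (word_mult 4 (fst p) (snd p)))"
proof -
  define S where "S = supp f \<times> supp h"
  define m where "m = (\<lambda>p::(('a \<times> nat) list \<times> ('a \<times> nat) list). word_mult 4 (fst p) (snd p))"
  have fS: "finite S" unfolding S_def using ff fh by simp
  have mi: "(\<lambda>(x,y). word_mult 4 x y) ` S = m ` S" unfolding m_def by (simp add: case_prod_unfold)
  have set: "{(x,y). f x \<noteq> 0 \<and> h y \<noteq> 0 \<and> word_mult 4 x y = w} = {p \<in> S. m p = w}" for w
    unfolding S_def m_def supp_def by auto
  have gm: "gmult 4 f h w = (\<Sum>p\<in>{p \<in> S. m p = w}. f (fst p) * h (snd p))" for w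
    unfolding gmult_def set by (rule sum.cong) auto
  have "(\<Sum>w\<in>m ` S. gmult 4 f h w * \<Phi> w) = (\<Sum>w\<in>m ` S. \<Sum>p\<in>{p \<in> S. m p = w}. f (fst p) * h (snd p) * \<Phi> (m p))"
    unfolding gm sum_distrib_right by (intro sum.cong refl) auto
  also have "\<dots> = (\<Sum>p\<in>S. f (fst p) * h (snd p) * \<Phi> (m p))"
    by (rule sum.group) (use fS in auto)
  finally show ?thesis unfolding S_def m_def by (simp add: case_prod_unfold)
qed

lemma cnj_gmult: "(\<lambda>w. cnj (gmult 4 f h w)) = gmult 4 (\<lambda>w. cnj (f w)) (\<lambda>w. cnj (h w))"
  unfolding gmult_def by (auto simp: fun_eq_iff cnj_sum case_prod_unfold)

lemma supp_cnj: "supp (\<lambda>w. cnj (f w)) = supp f" by (simp add: supp_def)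

definition good_supp :: "'v set \<Rightarrow> (('v \<times> nat) list \<Rightarrow> complex) \<Rightarrow> bool" where
  "good_supp V f \<longleftrightarrow> (\<forall>w. f w \<noteq> 0 \<longrightarrow> goodw V w)"

lemma fin_good_iff: "fin_good V f \<longleftrightarrow> finite (supp f) \<and> good_supp V f"
  by (simp add: fin_good_def good_supp_def)

lemma piA_gmult:
  assumes fV: "finite V" and ff: "fin_good V f" and fh: "fin_good V h"
  shows "piA V (gmult 4 f h) g u = piA V f (piA V h g) u"
proof -
  have f1: "finite (supp f)" "finite (supp h)" using ff fh by (auto simp: fin_good_def)
  have gf: "goodw V x" if "x \<in> supp f" for x using ff that by (auto simp: fin_good_def supp_def)
  have "piA V (gmult 4 f h) g u = (\<Sum>w\<in>(\<lambda>(x,y). word_mult 4 x y) ` (supp f \<times> supp h). gmult 4 f h w * PiW V w g u)"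
    by (rule piA_sub) (use f1 supp_gmult in auto)
  also have "\<dots> = (\<Sum>p\<in>supp f \<times> supp h. f (fst p) * h (snd p) * PiW V (word_mult 4 (fst p) (snd p)) g u)"
    by (rule gmult_sum[OF f1])
  also have "\<dots> = (\<Sum>p\<in>supp f \<times> supp h. f (fst p) * h (snd p) * PiW V (fst p) (PiW V (snd p) g) u)"
    by (rule sum.cong) (auto simp: PiW_mult[OF fV gf])
  also have "\<dots> = (\<Sum>x\<in>supp f. \<Sum>y\<in>supp h. f x * h y * PiW V x (PiW V y g) u)"
    by (simp add: sum.cartesian_product case_prod_unfold)
  also have "\<dots> = piA V f (piA V h g) u"
    unfolding piA_def[of V f] piA_def[of V h]
    by (simp add: lin_sump[OF lin_PiW[OF fV]] lin_scalep[OF lin_PiW[OF fV]] f1 sum_distrib_left mult.assoc)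
  finally show ?thesis .
qed

lemma rho_gmult:
  assumes fV: "finite V" and ff: "fin_good V f" and fh: "fin_good V h"
  shows "rho V (gmult 4 f h) g u = rho V h (rho V f g) u"
proof -
  have f1: "finite (supp f)" "finite (supp h)" using ff fh by (auto simp: fin_good_def)
  have f2: "finite (supp (\<lambda>w. cnj (f w)))" "finite (supp (\<lambda>w. cnj (h w)))" using f1 by (simp_all add: supp_cnj)
  have gf: "goodw V x" if "x \<in> supp f" for x using ff that by (auto simp: fin_good_def supp_def)
  have gh: "goodw V x" if "x \<in> supp h" for x using fh that by (auto simp: fin_good_def supp_def)
  have "rho V (gmult 4 f h) g u = (\<Sum>w\<in>(\<lambda>(x,y). word_mult 4 x y) ` (supp f \<times> supp h). cnj (gmult 4 f h w) * PiW V (word_inv 4 w) g u)"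
    by (rule rho_sub) (use f1 supp_gmult in auto)
  also have "\<dots> = (\<Sum>w\<in>(\<lambda>(x,y). word_mult 4 x y) ` (supp (\<lambda>w. cnj (f w)) \<times> supp (\<lambda>w. cnj (h w))).
        gmult 4 (\<lambda>w. cnj (f w)) (\<lambda>w. cnj (h w)) w * PiW V (word_inv 4 w) g u)"
    unfolding supp_cnj cnj_gmult[symmetric] ..
  also have "\<dots> = (\<Sum>p\<in>supp f \<times> supp h. cnj (f (fst p)) * cnj (h (snd p)) * PiW V (word_inv 4 (word_mult 4 (fst p) (snd p))) g u)"
    using gmult_sum[OF f2, of "\<lambda>w. PiW V (word_inv 4 w) g u"] by (simp only: supp_cnj)
  also have "\<dots> = (\<Sum>p\<in>supp f \<times> supp h. cnj (f (fst p)) * cnj (h (snd p)) * PiW V (word_inv 4 (snd p)) (PiW V (word_inv 4 (fst p)) g) u)"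
    by (rule sum.cong) (auto simp: PiW_inv_mult[OF fV gf gh])
  also have "\<dots> = (\<Sum>x\<in>supp f. \<Sum>y\<in>supp h. cnj (f x) * cnj (h y) * PiW V (word_inv 4 y) (PiW V (word_inv 4 x) g) u)"
    by (simp add: sum.cartesian_product case_prod_unfold)
  also have "\<dots> = (\<Sum>y\<in>supp h. \<Sum>x\<in>supp f. cnj (f x) * cnj (h y) * PiW V (word_inv 4 y) (PiW V (word_inv 4 x) g) u)"
    by (rule sum.swap)
  also have "\<dots> = rho V h (rho V f g) u"
    unfolding rho_def[of V f] rho_def[of V h]
    by (simp add: lin_sump[OF lin_PiW[OF fV]] lin_scalep[OF lin_PiW[OF fV]] f1 sum_distrib_left mult_ac)
  finally show ?thesis .
qed



lemma supp_gstar: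
  assumes ff: "fin_good V f"
  shows "supp (gstar 4 f) = word_inv 4 ` supp f"
proof
  show "supp (gstar 4 f) \<subseteq> word_inv 4 ` supp f"
  proof
    fix w assume "w \<in> supp (gstar 4 f)"
    then have nz: "f (word_inv 4 w) \<noteq> 0" by (simp add: supp_def gstar_def)
    then have "goodw V (word_inv 4 w)" using ff by (auto simp: fin_good_def)
    then have "goodw V w" by (rule goodw_inv_rev)
    then have "w = word_inv 4 (word_inv 4 w)" by (simp add: inv_inv)
    then show "w \<in> word_inv 4 ` supp f" using nz by (auto simp: supp_def)
  qed
next
  show "word_inv 4 ` supp f \<subseteq> supp (gstar 4 f)"
  proof
    fix w assume "w \<in> word_inv 4 ` supp f"
    then obtain x where x: "x \<in> supp f" "w = word_inv 4 x" by auto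
    then have "goodw V x" using ff by (auto simp: fin_good_def supp_def)
    then show "w \<in> supp (gstar 4 f)" using x by (simp add: supp_def gstar_def inv_inv)
  qed
qed

lemma inj_inv:
  assumes ff: "fin_good V f"
  shows "inj_on (word_inv 4) (supp f)"
proof (rule inj_onI)
  fix x y assume "x \<in> supp f" "y \<in> supp f" "word_inv 4 x = word_inv 4 y"
  moreover have "goodw V x" "goodw V y" using ff calculation by (auto simp: fin_good_def supp_def)
  ultimately show "x = y" by (metis inv_inv)
qed

lemma piA_gstar:
  assumes ff: "fin_good V f"
  shows "piA V (gstar 4 f) g u = rho V f g u"
proof -
  have "piA V (gstar 4 f) g u = (\<Sum>w\<in>word_inv 4 ` supp f. gstar 4 f w * PiW V w g u)"
    unfolding piA_def supp_gstar[OF ff] ..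
  also have "\<dots> = (\<Sum>x\<in>supp f. gstar 4 f (word_inv 4 x) * PiW V (word_inv 4 x) g u)"
    by (subst sum.reindex[OF inj_inv[OF ff]]) simp
  also have "\<dots> = rho V f g u"
    unfolding rho_def
  proof (rule sum.cong[OF refl])
    fix x assume "x \<in> supp f"
    then have "goodw V x" using ff by (auto simp: fin_good_def supp_def)
    then show "gstar 4 f (word_inv 4 x) * PiW V (word_inv 4 x) g u = cnj (f x) * PiW V (word_inv 4 x) g u"
      by (simp add: gstar_def inv_inv)
  qed
  finally show ?thesis .
qed

lemma rho_gstar:
  assumes ff: "fin_good V f"
  shows "rho V (gstar 4 f) g u = piA V f g u"
proof -
  have "rho V (gstar 4 f) g u = (\<Sum>w\<in>word_inv 4 ` supp f. cnj (gstar 4 f w) * PiW V (word_inv 4 w) g u)"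
    unfolding rho_def supp_gstar[OF ff] ..
  also have "\<dots> = (\<Sum>x\<in>supp f. cnj (gstar 4 f (word_inv 4 x)) * PiW V (word_inv 4 (word_inv 4 x)) g u)"
    by (subst sum.reindex[OF inj_inv[OF ff]]) simp
  also have "\<dots> = piA V f g u"
    unfolding piA_def
  proof (rule sum.cong[OF refl])
    fix x assume "x \<in> supp f"
    then have "goodw V x" using ff by (auto simp: fin_good_def supp_def)
    then show "cnj (gstar 4 f (word_inv 4 x)) * PiW V (word_inv 4 (word_inv 4 x)) g u = f x * PiW V x g u"
      by (simp add: gstar_def inv_inv)
  qed
  finally show ?thesis .
qed

lemma fin_good_gstar:
  assumes ff: "fin_good V f" shows "fin_good V (gstar 4 f)"
proof -
  have "finite (supp (gstar 4 f))" unfolding supp_gstar[OF ff] using ff by (simp add: fin_good_def)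
  moreover have "goodw V w" if "gstar 4 f w \<noteq> 0" for w
  proof -
    have "f (word_inv 4 w) \<noteq> 0" using that by (simp add: gstar_def)
    then have "goodw V (word_inv 4 w)" using ff by (auto simp: fin_good_def)
    then show ?thesis by (rule goodw_inv_rev)
  qed
  ultimately show ?thesis by (simp add: fin_good_def)
qed

lemma fin_good_gmult:
  assumes ff: "fin_good V f" and fh: "fin_good V h" shows "fin_good V (gmult 4 f h)"
proof -
  have f1: "finite (supp f)" "finite (supp h)" using ff fh by (auto simp: fin_good_def)
  have "finite (supp (gmult 4 f h))"
    by (rule finite_subset[OF supp_gmult]) (use f1 in simp)
  moreover have "goodw V w" if "gmult 4 f h w \<noteq> 0" for w
  proof -
    have "w \<in> (\<lambda>(x,y). word_mult 4 x y) ` (supp f \<times> supp h)" using supp_gmult that by (auto simp: supp_def)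
    then obtain x y where "x \<in> supp f" "y \<in> supp h" "w = word_mult 4 x y" by auto
    moreover then have "goodw V x" "goodw V y" using ff fh by (auto simp: fin_good_def supp_def)
    ultimately show ?thesis using goodw_mult by blast
  qed
  ultimately show ?thesis by (simp add: fin_good_def)
qed

lemma supp_gadd: "supp (gadd f h) \<subseteq> supp f \<union> supp h" by (auto simp: supp_def gadd_def)

lemma fin_good_gadd:
  assumes ff: "fin_good V f" and fh: "fin_good V h" shows "fin_good V (gadd f h)"
proof -
  have "finite (supp (gadd f h))" by (rule finite_subset[OF supp_gadd]) (use ff fh in \<open>simp add: fin_good_def\<close>)
  moreover have "goodw V w" if "gadd f h w \<noteq> 0" for w
  proof -
    from that have "f w \<noteq> 0 \<or> h w \<noteq> 0" by (auto simp: gadd_def)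
    then show ?thesis using ff fh by (auto simp: fin_good_def)
  qed
  ultimately show ?thesis by (simp add: fin_good_def)
qed

lemma fin_good_zero: "fin_good V (\<lambda>w. 0)" by (simp add: fin_good_def supp_def)

lemma galg_fin_good: "a \<in> galg V 4 \<Longrightarrow> fin_good V a"
  by (auto simp: galg_def fin_good_def supp_def reduced_word_def goodw_def)

lemma piA_gadd:
  assumes ff: "fin_good V f" and fh: "fin_good V h"
  shows "piA V (gadd f h) g u = piA V f g u + piA V h g u"
proof -
  have fU: "finite (supp f \<union> supp h)" using ff fh by (simp add: fin_good_def)
  have "piA V (gadd f h) g u = (\<Sum>w\<in>supp f \<union> supp h. gadd f h w * PiW V w g u)"
    by (rule piA_sub[OF fU supp_gadd])
  also have "\<dots> = (\<Sum>w\<in>supp f \<union> supp h. f w * PiW V w g u) + (\<Sum>w\<in>supp f \<union> supp h. h w * PiW V w g u)"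
    by (simp add: gadd_def distrib_right sum.distrib)
  also have "\<dots> = piA V f g u + piA V h g u"
    by (simp add: piA_sub[OF fU])
  finally show ?thesis .
qed

lemma rho_gadd:
  assumes ff: "fin_good V f" and fh: "fin_good V h"
  shows "rho V (gadd f h) g u = rho V f g u + rho V h g u"
proof -
  have fU: "finite (supp f \<union> supp h)" using ff fh by (simp add: fin_good_def)
  have "rho V (gadd f h) g u = (\<Sum>w\<in>supp f \<union> supp h. cnj (gadd f h w) * PiW V (word_inv 4 w) g u)"
    by (rule rho_sub[OF fU supp_gadd])
  also have "\<dots> = (\<Sum>w\<in>supp f \<union> supp h. cnj (f w) * PiW V (word_inv 4 w) g u) + (\<Sum>w\<in>supp f \<union> supp h. cnj (h w) * PiW V (word_inv 4 w) g u)"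
    by (simp add: gadd_def distrib_right sum.distrib)
  also have "\<dots> = rho V f g u + rho V h g u"
    by (simp add: rho_sub[OF fU])
  finally show ?thesis .
qed

lemma piA_zerof: "piA V (\<lambda>w. 0) g u = 0" by (simp add: piA_def supp_def)
lemma rho_zerof: "rho V (\<lambda>w. 0) g u = 0" by (simp add: rho_def supp_def)

lemma piA_at0: "finite V \<Longrightarrow> piA V f (\<lambda>u. 0) u = 0"
  by (simp add: piA_def lin_zerop[OF lin_PiW])
lemma rho_at0: "finite V \<Longrightarrow> rho V f (\<lambda>u. 0) u = 0"
  by (simp add: rho_def lin_zerop[OF lin_PiW])



lemma omega4: "omega 4 = \<i>"
proof -
  have e: "2 * complex_of_real pi * \<i> / of_nat 4 = \<i> * complex_of_real (pi / 2)"
    by (simp add: field_simps)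
  have "omega 4 = exp (\<i> * complex_of_real (pi / 2))" unfolding omega_def e ..
  also have "\<dots> = cis (pi / 2)" by (rule cis_conv_exp[symmetric])
  also have "\<dots> = \<i>" by simp
  finally show ?thesis .
qed

lemma sum4: "(\<Sum>k<4::nat. f k) = f 0 + f 1 + f 2 + f 3"
  by (simp add: numeral_eq_Suc add.commute add.left_commute)

lemma coefA:
  assumes "a < 4" "b < 4"
  shows "(\<Sum>k<4::nat. (inverse \<i> ^ a) ^ k * \<i> ^ (b * k)) = (if a = b then 4 else 0)"
proof -
  have "a = 0 \<or> a = 1 \<or> a = 2 \<or> a = 3" "b = 0 \<or> b = 1 \<or> b = 2 \<or> b = 3" using assms by auto
  then show ?thesis unfolding sum4 by (auto simp: power_mult_distrib numeral_eq_Suc)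
qed

lemma coefB:
  assumes "a < 4" "b < 4"
  shows "(\<Sum>k<4::nat. cnj (inverse \<i> ^ a) ^ k * \<i> ^ (b * (3 * k))) = (if a = b then 4 else 0)"
proof -
  have "a = 0 \<or> a = 1 \<or> a = 2 \<or> a = 3" "b = 0 \<or> b = 1 \<or> b = 2 \<or> b = 3" using assms by auto
  then show ?thesis unfolding sum4 by (auto simp: power_mult_distrib numeral_eq_Suc)
qed

definition Fe :: "'v \<Rightarrow> nat \<Rightarrow> ('v \<times> nat) list \<Rightarrow> complex" where
  "Fe v a = gscale (inverse (omega 4) ^ a) (gelem (ugen 4 v))"

lemma ugen4: "ugen 4 v = [(v, 1)]" by (simp add: ugen_def)

lemma Fe_eq: "Fe v a = (\<lambda>w. if w = [(v,1)] then inverse \<i> ^ a else 0)"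
  by (auto simp: Fe_def gscale_def gelem_def ugen4 omega4 fun_eq_iff)

lemma supp_Fe: "supp (Fe v a) = {[(v,1)]}" by (auto simp: supp_def Fe_eq)

lemma fin_good_Fe: "v \<in> V \<Longrightarrow> fin_good V (Fe v a)"
  unfolding fin_good_def supp_Fe by (auto simp: Fe_eq split: if_splits)

lemma piA_Fe: "piA V (Fe v a) g u = inverse \<i> ^ a * Uop V v 1 g u"
  unfolding piA_def supp_Fe by (simp add: Fe_eq)

lemma rho_Fe: "rho V (Fe v a) g u = cnj (inverse \<i> ^ a) * Uop V v 3 g u"
  unfolding rho_def supp_Fe by (simp add: Fe_eq word_inv_def)

lemma supp_gone: "supp gone = {[]}" by (auto simp: supp_def gone_def gelem_def)

lemma gpow_props:
  assumes fV: "finite V" and vV: "v \<in> V"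
  shows "fin_good V (gpow 4 (Fe v a) k) \<and>
         (\<forall>g u. piA V (gpow 4 (Fe v a) k) g u = (inverse \<i> ^ a) ^ k * Uop V v k g u) \<and>
         (\<forall>g u. rho V (gpow 4 (Fe v a) k) g u = cnj (inverse \<i> ^ a) ^ k * Uop V v (3 * k) g u)"
proof (induction k)
  case 0
  have "fin_good V gone" unfolding fin_good_def supp_gone by (auto simp: gone_def gelem_def)
  then show ?case unfolding gpow.simps piA_def rho_def supp_gone by (simp add: gone_def gelem_def Uop_0)
next
  case (Suc k)
  have fk: "fin_good V (gpow 4 (Fe v a) k)" using Suc by blast
  have fF: "fin_good V (Fe v a)" by (rule fin_good_Fe[OF vV])
  have A: "piA V (gpow 4 (Fe v a) (Suc k)) g u = (inverse \<i> ^ a) ^ Suc k * Uop V v (Suc k) g u" for g u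
  proof -
    have "piA V (gpow 4 (Fe v a) (Suc k)) g u = piA V (gpow 4 (Fe v a) k) (piA V (Fe v a) g) u"
      by (simp add: piA_gmult[OF fV fk fF])
    also have "\<dots> = (inverse \<i> ^ a) ^ k * Uop V v k (\<lambda>u. inverse \<i> ^ a * Uop V v 1 g u) u"
      using Suc by (simp add: piA_Fe[abs_def])
    also have "\<dots> = (inverse \<i> ^ a) ^ k * (inverse \<i> ^ a * Uop V v k (Uop V v 1 g) u)"
      by (simp add: lin_scalep[OF lin_Uop[OF fV]])
    also have "\<dots> = (inverse \<i> ^ a) ^ Suc k * Uop V v (Suc k) g u"
      by (simp add: Uop_comp[OF fV vV])
    finally show ?thesis .
  qed
  have R: "rho V (gpow 4 (Fe v a) (Suc k)) g u = cnj (inverse \<i> ^ a) ^ Suc k * Uop V v (3 * Suc k) g u" for g u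
  proof -
    have "rho V (gpow 4 (Fe v a) (Suc k)) g u = rho V (Fe v a) (rho V (gpow 4 (Fe v a) k) g) u"
      by (simp add: rho_gmult[OF fV fk fF])
    also have "\<dots> = cnj (inverse \<i> ^ a) * Uop V v 3 (\<lambda>u. cnj (inverse \<i> ^ a) ^ k * Uop V v (3 * k) g u) u"
    proof -
      have rk: "rho V (gpow 4 (Fe v a) k) g = (\<lambda>u. cnj (inverse \<i> ^ a) ^ k * Uop V v (3 * k) g u)"
        by (rule ext) (use Suc in blast)
      show ?thesis unfolding rk by (rule rho_Fe)
    qed
    also have "\<dots> = cnj (inverse \<i> ^ a) * (cnj (inverse \<i> ^ a) ^ k * Uop V v 3 (Uop V v (3 * k) g) u)"
      by (simp only: lin_scalep[OF lin_Uop[OF fV]])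
    also have "\<dots> = cnj (inverse \<i> ^ a) ^ Suc k * Uop V v (3 * Suc k) g u"
      by (simp add: Uop_comp[OF fV vV])
    finally show ?thesis .
  qed
  have "fin_good V (gpow 4 (Fe v a) (Suc k))" by (simp add: fin_good_gmult[OF fk fF])
  then show ?case using A R by blast
qed

lemma piA_comb:
  assumes fK: "finite K" and fg: "\<And>k. k \<in> K \<Longrightarrow> fin_good V (G k)"
  shows "piA V (\<lambda>w. r * (\<Sum>k\<in>K. G k w)) g u = r * (\<Sum>k\<in>K. piA V (G k) g u)"
proof -
  define W where "W = (\<Union>k\<in>K. supp (G k))"
  have fW: "finite W" unfolding W_def using fK fg by (auto simp: fin_good_def)
  have sW: "supp (\<lambda>w. r * (\<Sum>k\<in>K. G k w)) \<subseteq> W"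
  proof
    fix w assume "w \<in> supp (\<lambda>w. r * (\<Sum>k\<in>K. G k w))"
    then have "(\<Sum>k\<in>K. G k w) \<noteq> 0" by (simp add: supp_def)
    then obtain k where "k \<in> K" "G k w \<noteq> 0" by (meson sum.neutral)
    then show "w \<in> W" by (auto simp: W_def supp_def)
  qed
  have sk: "supp (G k) \<subseteq> W" if "k \<in> K" for k using that by (auto simp: W_def)
  have "piA V (\<lambda>w. r * (\<Sum>k\<in>K. G k w)) g u = (\<Sum>w\<in>W. r * (\<Sum>k\<in>K. G k w) * PiW V w g u)"
    by (rule piA_sub[OF fW sW])
  also have "\<dots> = r * (\<Sum>k\<in>K. \<Sum>w\<in>W. G k w * PiW V w g u)"
    by (simp add: sum_distrib_left sum_distrib_right mult.assoc sum.swap[of _ W])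
  also have "\<dots> = r * (\<Sum>k\<in>K. piA V (G k) g u)"
    by (simp add: piA_sub[OF fW sk])
  finally show ?thesis .
qed

lemma rho_comb:
  assumes fK: "finite K" and fg: "\<And>k. k \<in> K \<Longrightarrow> fin_good V (G k)"
  shows "rho V (\<lambda>w. r * (\<Sum>k\<in>K. G k w)) g u = cnj r * (\<Sum>k\<in>K. rho V (G k) g u)"
proof -
  define W where "W = (\<Union>k\<in>K. supp (G k))"
  have fW: "finite W" unfolding W_def using fK fg by (auto simp: fin_good_def)
  have sW: "supp (\<lambda>w. r * (\<Sum>k\<in>K. G k w)) \<subseteq> W"
  proof
    fix w assume "w \<in> supp (\<lambda>w. r * (\<Sum>k\<in>K. G k w))"
    then have "(\<Sum>k\<in>K. G k w) \<noteq> 0" by (simp add: supp_def)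
    then obtain k where "k \<in> K" "G k w \<noteq> 0" by (meson sum.neutral)
    then show "w \<in> W" by (auto simp: W_def supp_def)
  qed
  have sk: "supp (G k) \<subseteq> W" if "k \<in> K" for k using that by (auto simp: W_def)
  have "rho V (\<lambda>w. r * (\<Sum>k\<in>K. G k w)) g u = (\<Sum>w\<in>W. cnj (r * (\<Sum>k\<in>K. G k w)) * PiW V (word_inv 4 w) g u)"
    by (rule rho_sub[OF fW sW])
  also have "\<dots> = cnj r * (\<Sum>k\<in>K. \<Sum>w\<in>W. cnj (G k w) * PiW V (word_inv 4 w) g u)"
    by (simp add: cnj_sum sum_distrib_left sum_distrib_right mult.assoc sum.swap[of _ W])
  also have "\<dots> = cnj r * (\<Sum>k\<in>K. rho V (G k) g u)"
    by (simp add: rho_sub[OF fW sk])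
  finally show ?thesis .
qed

lemma fin_good_comb:
  assumes fK: "finite K" and fg: "\<And>k. k \<in> K \<Longrightarrow> fin_good V (G k)"
  shows "fin_good V (\<lambda>w. r * (\<Sum>k\<in>K. G k w))"
proof -
  have "supp (\<lambda>w. r * (\<Sum>k\<in>K. G k w)) \<subseteq> (\<Union>k\<in>K. supp (G k))"
  proof
    fix w assume "w \<in> supp (\<lambda>w. r * (\<Sum>k\<in>K. G k w))"
    then have "(\<Sum>k\<in>K. G k w) \<noteq> 0" by (simp add: supp_def)
    then obtain k where "k \<in> K" "G k w \<noteq> 0" by (meson sum.neutral)
    then show "w \<in> (\<Union>k\<in>K. supp (G k))" by (auto simp: supp_def)
  qed
  moreover have "finite (\<Union>k\<in>K. supp (G k))" using fK fg by (auto simp: fin_good_def)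
  moreover have "goodw V w" if "r * (\<Sum>k\<in>K. G k w) \<noteq> 0" for w
  proof -
    from that obtain k where "k \<in> K" "G k w \<noteq> 0" by (metis mult_zero_right sum.neutral)
    then show ?thesis using fg by (auto simp: fin_good_def)
  qed
  ultimately show ?thesis by (auto simp: fin_good_def intro: finite_subset)
qed

lemma eproj_Fe: "eproj 4 v a = (\<lambda>w. (1 / of_nat 4) * (\<Sum>k<4. gpow 4 (Fe v a) k w))"
  by (simp add: eproj_def Fe_def)

lemma fin_good_eproj: assumes "finite V" "v \<in> V" shows "fin_good V (eproj 4 v a)"
  unfolding eproj_Fe by (rule fin_good_comb) (use gpow_props[OF assms] in blast)+

lemma delta4:
  assumes a: "a < (4::nat)"
  shows "(\<Sum>b<4. (if a = b then 4 else 0) * (x b :: complex)) = 4 * x a"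
proof -
  have "(\<Sum>b<4. (if a = b then 4 else 0) * x b) = (\<Sum>b<4. if a = b then 4 * x b else 0)"
    by (rule sum.cong) auto
  also have "\<dots> = 4 * x a" using a by (simp add: sum.delta)
  finally show ?thesis .
qed

lemma Uop_expand: "Uop V v k g u = (\<Sum>b<4. \<i> ^ (b * k) * Pop V v b g u)"
  by (simp add: Uop_def)

lemma piA_eproj:
  assumes fV: "finite V" and vV: "v \<in> V" and a: "a < 4"
  shows "piA V (eproj 4 v a) g u = Pop V v a g u"
proof -
  have "piA V (eproj 4 v a) g u = (1 / of_nat 4) * (\<Sum>k<4. piA V (gpow 4 (Fe v a) k) g u)"
    unfolding eproj_Fe by (rule piA_comb) (use gpow_props[OF fV vV] in auto)
  also have "\<dots> = (1 / of_nat 4) * (\<Sum>k<4. (inverse \<i> ^ a) ^ k * (\<Sum>b<4. \<i> ^ (b * k) * Pop V v b g u))"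
  proof -
    have pk: "piA V (gpow 4 (Fe v a) k) g u = (inverse \<i> ^ a) ^ k * Uop V v k g u" for k
      using gpow_props[OF fV vV] by blast
    show ?thesis unfolding pk Uop_expand ..
  qed
  also have "\<dots> = (1 / of_nat 4) * (\<Sum>b<4. (\<Sum>k<4. (inverse \<i> ^ a) ^ k * \<i> ^ (b * k)) * Pop V v b g u)"
    unfolding sum_distrib_left sum_distrib_right mult.assoc by (rule sum.swap)
  also have "\<dots> = (1 / of_nat 4) * (\<Sum>b<4. (if a = b then 4 else 0) * Pop V v b g u)"
    using coefA[OF a] by simp
  also have "\<dots> = Pop V v a g u" unfolding delta4[OF a] by simp
  finally show ?thesis .
qed

lemma rho_eproj:
  assumes fV: "finite V" and vV: "v \<in> V" and a: "a < 4"
  shows "rho V (eproj 4 v a) g u = Pop V v a g u"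
proof -
  have "rho V (eproj 4 v a) g u = cnj (1 / of_nat 4) * (\<Sum>k<4. rho V (gpow 4 (Fe v a) k) g u)"
    unfolding eproj_Fe by (rule rho_comb) (use gpow_props[OF fV vV] in auto)
  also have "\<dots> = cnj (1 / of_nat 4) * (\<Sum>k<4. cnj (inverse \<i> ^ a) ^ k * (\<Sum>b<4. \<i> ^ (b * (3 * k)) * Pop V v b g u))"
  proof -
    have pk: "rho V (gpow 4 (Fe v a) k) g u = cnj (inverse \<i> ^ a) ^ k * Uop V v (3 * k) g u" for k
      using gpow_props[OF fV vV] by blast
    show ?thesis unfolding pk Uop_expand ..
  qed
  also have "\<dots> = cnj (1 / of_nat 4) * (\<Sum>b<4. (\<Sum>k<4. cnj (inverse \<i> ^ a) ^ k * \<i> ^ (b * (3 * k))) * Pop V v b g u)"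
    unfolding sum_distrib_left sum_distrib_right mult.assoc by (rule sum.swap)
  also have "\<dots> = cnj (1 / of_nat 4) * (\<Sum>b<4. (if a = b then 4 else 0) * Pop V v b g u)"
    using coefB[OF a] by simp
  also have "\<dots> = Pop V v a g u" unfolding delta4[OF a] by simp
  finally show ?thesis .
qed



lemma ideal_inv:
  assumes fV: "finite V" and G: "is_graph V E" and x: "x \<in> hom_ideal V E 4 (K_edges 4)"
  shows "fin_good V x \<and> (\<forall>g u. piA V x g u = 0) \<and> (\<forall>g u. rho V x g u = 0)"
  using x unfolding hom_ideal_def
proof (induction rule: star_ideal.induct)
  case (gen s)
  then obtain v w a b where s: "s = gmult 4 (eproj 4 v a) (eproj 4 w b)"
    and vw: "v \<in> V" "w \<in> V" "a < 4" "b < 4" and nh: "\<not> hom_rule E (K_edges 4) v w a b"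
    by blast
  have fe1: "fin_good V (eproj 4 v a)" by (rule fin_good_eproj[OF fV vw(1)])
  have fe2: "fin_good V (eproj 4 w b)" by (rule fin_good_eproj[OF fV vw(2)])
  have pe: "piA V (eproj 4 w b) g = Pop V w b g" for g by (rule ext) (rule piA_eproj[OF fV vw(2,4)])
  have re: "rho V (eproj 4 v a) g = Pop V v a g" for g by (rule ext) (rule rho_eproj[OF fV vw(1,3)])
  have cases: "(v = w \<and> a \<noteq> b) \<or> (v \<noteq> w \<and> a = b)"
  proof -
    have "(v = w \<and> a \<noteq> b) \<or> ((v, w) \<in> E \<and> (a, b) \<notin> K_edges 4)" using nh by (simp add: hom_rule_def)
    moreover have "(v, v) \<notin> E" using G by (simp add: is_graph_def)
    ultimately show ?thesis using vw by (auto simp: K_edges_def)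
  qed
  have o1: "Pop V v a (Pop V w b g) = (\<lambda>u. 0)" for g
    using cases Pop_orth_same[OF fV vw(1) vw(3) vw(4)] Pop_orth_vert[OF fV vw(1) vw(2)] by auto
  have o2: "Pop V w b (Pop V v a g) = (\<lambda>u. 0)" for g
    using cases Pop_orth_same[OF fV vw(2) vw(4) vw(3)] Pop_orth_vert[OF fV vw(2) vw(1)] by auto
  have "piA V s g u = 0" for g u
    unfolding s piA_gmult[OF fV fe1 fe2] pe piA_eproj[OF fV vw(1,3)] o1 ..
  moreover have "rho V s g u = 0" for g u
    unfolding s rho_gmult[OF fV fe1 fe2] re rho_eproj[OF fV vw(2,4)] o2 ..
  moreover have "fin_good V s" unfolding s by (rule fin_good_gmult[OF fe1 fe2])
  ultimately show ?case by blast
next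
  case zero
  then show ?case by (simp add: fin_good_zero piA_zerof rho_zerof)
next
  case (add x y)
  then show ?case by (simp add: fin_good_gadd piA_gadd rho_gadd)
next
  case (lmult a x)
  have fa: "fin_good V a" by (rule galg_fin_good[OF lmult.hyps(1)])
  have fx: "fin_good V x" and px: "piA V x g = (\<lambda>u. 0)" and rx: "rho V x g = (\<lambda>u. 0)" for g
    using lmult.IH by auto
  have "piA V (gmult 4 a x) g u = 0" for g u
    unfolding piA_gmult[OF fV fa fx] px by (simp add: piA_at0[OF fV])
  moreover have "rho V (gmult 4 a x) g u = 0" for g u
    unfolding rho_gmult[OF fV fa fx] rx by (simp add: rho_at0[OF fV])
  ultimately show ?case using fin_good_gmult[OF fa fx] by blast
next
  case (rmult a x)
  have fa: "fin_good V a" by (rule galg_fin_good[OF rmult.hyps(1)])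
  have fx: "fin_good V x" and px: "piA V x g = (\<lambda>u. 0)" and rx: "rho V x g = (\<lambda>u. 0)" for g
    using rmult.IH by auto
  have "piA V (gmult 4 x a) g u = 0" for g u
    unfolding piA_gmult[OF fV fx fa] px by simp
  moreover have "rho V (gmult 4 x a) g u = 0" for g u
    unfolding rho_gmult[OF fV fx fa] rx by (simp add: rho_at0[OF fV])
  ultimately show ?case using fin_good_gmult[OF fx fa] by blast
next
  case (star x)
  have fx: "fin_good V x" using star.IH by blast
  show ?case using star.IH by (simp add: fin_good_gstar[OF fx] piA_gstar[OF fx] rho_gstar[OF fx])
qed

lemma piA_gone: "piA V gone g u = g u"
  unfolding piA_def supp_gone by (simp add: gone_def gelem_def)

theorem mainTheorem1:
  fixes V :: "'v set" and E :: "('v \<times> 'v) set"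
  assumes "is_graph V E"
  shows "hom_alg_nonzero V E 4 (K_edges 4) \<and> gone \<notin> hom_ideal V E 4 (K_edges 4) \<and> chi_alg V E \<le> 4"
proof -
  have fV: "finite V" using assms by (simp add: is_graph_def)
  have notin: "gone \<notin> hom_ideal V E 4 (K_edges 4)"
  proof
    assume "gone \<in> hom_ideal V E 4 (K_edges 4)"
    then have "piA V gone (\<lambda>u. 1) [] = 0" using ideal_inv[OF fV assms] by blast
    then show False by (simp add: piA_gone)
  qed
  have gin: "gone \<in> galg V 4"
    unfolding galg_def
  proof (intro CollectI conjI allI impI)
    have "{w. (gone :: ('v \<times> nat) list \<Rightarrow> complex) w \<noteq> 0} = {[]}" by (auto simp: gone_def gelem_def)
    then show "finite {w. (gone :: ('v \<times> nat) list \<Rightarrow> complex) w \<noteq> 0}" by simp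
  next
    fix w assume "(gone :: ('v \<times> nat) list \<Rightarrow> complex) w \<noteq> 0"
    then have "w = []" by (auto simp: gone_def gelem_def split: if_splits)
    then show "reduced_word V 4 w" by (simp add: reduced_word_def)
  qed
  have nz: "hom_alg_nonzero V E 4 (K_edges 4)"
    unfolding hom_alg_nonzero_def using gin notin by blast
  have "chi_alg V E \<le> 4"
    unfolding chi_alg_def by (rule Least_le) (use nz in simp)
  then show ?thesis using nz notin by blast
qed


end
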